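(* Let $X$ be a continuous dcpo (with its Scott topology). Then $\mathbb{P}_{\mathsf{AP}}(X)$ (resp. $\mathbb{P}^{\le 1}_{\mathsf{AP}}(X)$), ordered pointwise, is a continuous dcpo, with a basis consisting of the maps $h\mapsto\max_{i=1}^m\sum_{j=1}^{n_i}a_{ij}h(x_{ij})$ with $m\ge1$, $a_{ij}\in\mathbb{R}_+$, $x_{ij}\in X$ (resp., additionally with $\sum_{j=1}^{n_i}a_{ij}\le1$ for every $i$). If $X$ is a pointed continuous dcpo with least element $\bot$, then $\mathbb{P}^1_{\mathsf{AP}}(X)$ is a pointed continuous dcpo, with a basis given by such maps with $\sum_{j=1}^{n_i}a_{ij}=1$ for every $i$, and its least element is $h\mapsto h(\bot)$.
   Context: $\overline{\mathbb{R}}_+=[0,+\infty]$ with the Scott topology. $\mathcal{L}X$: Scott-continuous maps $X\to\overline{\mathbb{R}}_+$ ordered pointwise; $\mathbf 1$ constant map $1$. A Hoare prevision on $X$ is a Scott-continuous map $F:\mathcal{L}X\to\overline{\mathbb{R}}_+$ (for the Scott topology on $\mathcal LX$) that is positively homogeneous ($F(ah)=aF(h)$, $a\in\mathbb{R}_+$) and sublinear ($F(h+h')\le F(h)+F(h')$). It is subnormalized if $F(\mathbf 1+h)\le1+F(h)$ for all $h$, normalized if equality. $\mathbb{P}_{\mathsf{AP}}(X)$, $\mathbb{P}^{\le1}_{\mathsf{AP}}(X)$, $\mathbb{P}^{1}_{\mathsf{AP}}(X)$: all / subnormalized / normalized Hoare previsions, ordered pointwise. A basis of a continuous dcpo $D$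 is a subset $B$ such that every element is the directed supremum of the elements of $B$ way-below it. *)

theory Defs
  imports Main "HOL-Library.Extended_Nonnegative_Real"
begin

definition directed_on :: "'a set \<Rightarrow> ('a \<Rightarrow> 'a \<Rightarrow> bool) \<Rightarrow> 'a set \<Rightarrow> bool" where
  "directed_on D le S \<longleftrightarrow> S \<subseteq> D \<and> S \<noteq> {} \<and> (\<forall>x\<in>S. \<forall>y\<in>S. \<exists>z\<in>S. le x z \<and> le y z)"

definition is_lub_on :: "'a set \<Rightarrow> ('a \<Rightarrow> 'a \<Rightarrow> bool) \<Rightarrow> 'a set \<Rightarrow> 'a \<Rightarrow> bool" where
  "is_lub_on D le S u \<longleftrightarrow> u \<in> D \<and> (\<forall>x\<in>S. le x u) \<and> (\<forall>v\<in>D. (\<forall>x\<in>S. le x v) \<longrightarrow> le u v)"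

definition partial_order_on_rel :: "'a set \<Rightarrow> ('a \<Rightarrow> 'a \<Rightarrow> bool) \<Rightarrow> bool" where
  "partial_order_on_rel D le \<longleftrightarrow>
     (\<forall>x\<in>D. le x x) \<and>
     (\<forall>x\<in>D. \<forall>y\<in>D. le x y \<and> le y x \<longrightarrow> x = y) \<and>
     (\<forall>x\<in>D. \<forall>y\<in>D. \<forall>z\<in>D. le x y \<and> le y z \<longrightarrow> le x z)"

definition dcpo_on :: "'a set \<Rightarrow> ('a \<Rightarrow> 'a \<Rightarrow> bool) \<Rightarrow> bool" where
  "dcpo_on D le \<longleftrightarrow> partial_order_on_rel D le \<and>
     (\<forall>S. directed_on D le S \<longrightarrow> (\<exists>u. is_lub_on D le S u))"

definition way_below_on :: "'a set \<Rightarrow> ('a \<Rightarrow> 'a \<Rightarrow> bool) \<Rightarrow> 'a \<Rightarrow> 'a \<Rightarrow> bool" where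
  "way_below_on D le x y \<longleftrightarrow> x \<in> D \<and> y \<in> D \<and>
     (\<forall>S u. directed_on D le S \<and> is_lub_on D le S u \<and> le y u \<longrightarrow> (\<exists>s\<in>S. le x s))"

definition basis_on :: "'a set \<Rightarrow> ('a \<Rightarrow> 'a \<Rightarrow> bool) \<Rightarrow> 'a set \<Rightarrow> bool" where
  "basis_on D le B \<longleftrightarrow> B \<subseteq> D \<and>
     (\<forall>x\<in>D. directed_on D le {b\<in>B. way_below_on D le b x} \<and>
             is_lub_on D le {b\<in>B. way_below_on D le b x} x)"

definition continuous_dcpo_on :: "'a set \<Rightarrow> ('a \<Rightarrow> 'a \<Rightarrow> bool) \<Rightarrow> bool" where
  "continuous_dcpo_on D le \<longleftrightarrow> dcpo_on D le \<and> basis_on D le D"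

text \<open>Scott-continuous maps from a dcpo into [0,\<infinity>] (= ennreal): monotone maps preserving
  suprema of directed sets (equivalently, continuous for the Scott topologies).\<close>
definition scott_cont_on :: "'a set \<Rightarrow> ('a \<Rightarrow> 'a \<Rightarrow> bool) \<Rightarrow> ('a \<Rightarrow> ennreal) \<Rightarrow> bool" where
  "scott_cont_on D le f \<longleftrightarrow>
     (\<forall>x\<in>D. \<forall>y\<in>D. le x y \<longrightarrow> f x \<le> f y) \<and>
     (\<forall>S u. directed_on D le S \<and> is_lub_on D le S u \<longrightarrow> f u = (SUP s\<in>S. f s))"

definition LX :: "('a::order \<Rightarrow> ennreal) set" where
  "LX = {h. scott_cont_on UNIV (\<le>) h}"

text \<open>Previsions are functions on all of 'a => ennreal; we make them extensional
  (value 0 outside LX) so that the pointwise order on LX is antisymmetric.\<close>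
definition hoare_prev :: "(('a::order \<Rightarrow> ennreal) \<Rightarrow> ennreal) set" where
  "hoare_prev = {F.
     scott_cont_on LX (\<le>) F \<and>
     (\<forall>h\<in>LX. \<forall>a::ennreal. a \<noteq> \<infinity> \<longrightarrow> F (\<lambda>x. a * h x) = a * F h) \<and>
     (\<forall>h\<in>LX. \<forall>h'\<in>LX. F (\<lambda>x. h x + h' x) \<le> F h + F h') \<and>
     (\<forall>h. h \<notin> LX \<longrightarrow> F h = 0)}"

definition hoare_prev_sub :: "(('a::order \<Rightarrow> ennreal) \<Rightarrow> ennreal) set" where
  "hoare_prev_sub = {F \<in> hoare_prev. \<forall>h\<in>LX. F (\<lambda>x. 1 + h x) \<le> 1 + F h}"

definition hoare_prev_norm :: "(('a::order \<Rightarrow> ennreal) \<Rightarrow> ennreal) set" where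
  "hoare_prev_norm = {F \<in> hoare_prev. \<forall>h\<in>LX. F (\<lambda>x. 1 + h x) = 1 + F h}"

definition prev_le :: "(('a::order \<Rightarrow> ennreal) \<Rightarrow> ennreal) \<Rightarrow> (('a \<Rightarrow> ennreal) \<Rightarrow> ennreal) \<Rightarrow> bool" where
  "prev_le F G \<longleftrightarrow> (\<forall>h\<in>LX. F h \<le> G h)"

text \<open>The map h \<mapsto> max_i sum_j a_ij h(x_ij); row i is the list of pairs (a_ij, x_ij).\<close>
definition simple_hoare :: "(ennreal \<times> 'a::order) list list \<Rightarrow> ('a \<Rightarrow> ennreal) \<Rightarrow> ennreal" where
  "simple_hoare rows = (\<lambda>h. if h \<in> LX
      then Max (set (map (\<lambda>row. \<Sum>(a, x)\<leftarrow>row. a * h x) rows)) else 0)"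

definition finite_coeffs :: "(ennreal \<times> 'a) list list \<Rightarrow> bool" where
  "finite_coeffs rows \<longleftrightarrow> rows \<noteq> [] \<and> (\<forall>row\<in>set rows. \<forall>(a, x)\<in>set row. a \<noteq> \<infinity>)"

definition simple_basis :: "(('a::order \<Rightarrow> ennreal) \<Rightarrow> ennreal) set" where
  "simple_basis = {simple_hoare rows | rows. finite_coeffs rows}"

definition simple_basis_sub :: "(('a::order \<Rightarrow> ennreal) \<Rightarrow> ennreal) set" where
  "simple_basis_sub = {simple_hoare rows | rows. finite_coeffs rows \<and>
      (\<forall>row\<in>set rows. (\<Sum>(a, x)\<leftarrow>row. a) \<le> 1)}"

definition simple_basis_norm :: "(('a::order \<Rightarrow> ennreal) \<Rightarrow> ennreal) set" where
  "simple_basis_norm = {simple_hoare rows | rows. finite_coeffs rows \<and>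
      (\<forall>row\<in>set rows. (\<Sum>(a, x)\<leftarrow>row. a) = 1)}"

end

theory Submission
  imports Defs "HOL-Library.FuncSet"
begin


lemma wb_le:
  assumes po: "partial_order_on_rel D le" and w: "way_below_on D le x y"
  shows "le x y"
proof -
  have y: "y \<in> D" using w by (auto simp: way_below_on_def)
  have yy: "le y y" using po y unfolding partial_order_on_rel_def by blast
  have "directed_on D le {y}" using yy y by (auto simp: directed_on_def)
  moreover have "is_lub_on D le {y} y" using yy y by (auto simp: is_lub_on_def)
  moreover note yy
  ultimately show ?thesis using w unfolding way_below_on_def by blast
qed

lemma basis_imp_self:
  assumes po: "partial_order_on_rel D le" and B: "basis_on D le B"
  shows "basis_on D le D"
  unfolding basis_on_def
proof (intro conjI ballI)
  show "D \<subseteq> D" by simp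
  fix x assume x: "x \<in> D"
  let ?Bx = "{b\<in>B. way_below_on D le b x}" and ?Dx = "{b\<in>D. way_below_on D le b x}"
  have BD: "B \<subseteq> D" using B by (auto simp: basis_on_def)
  have dB: "directed_on D le ?Bx" and lB: "is_lub_on D le ?Bx x" using B x by (auto simp: basis_on_def)
  have sub: "?Bx \<subseteq> ?Dx" using BD by auto
  have below: "le y x" if "y \<in> ?Dx" for y using wb_le[OF po] that by blast
  have lxx: "le x x" using po x unfolding partial_order_on_rel_def by blast
  have key: "\<exists>b\<in>?Bx. le y b" if "y\<in>?Dx" for y
  proof -
    from that have "way_below_on D le y x" by simp
    then show ?thesis using dB lB lxx unfolding way_below_on_def by blast
  qed
  have tr: "\<And>a b c. a \<in> D \<Longrightarrow> b \<in> D \<Longrightarrow> c \<in> D \<Longrightarrow> le a b \<Longrightarrow> le b c \<Longrightarrow> le a c"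
    using po unfolding partial_order_on_rel_def by blast
  show "directed_on D le ?Dx"
    unfolding directed_on_def
  proof (intro conjI ballI)
    show "?Dx \<subseteq> D" by auto
    show "?Dx \<noteq> {}" using dB sub unfolding directed_on_def by blast
    fix y1 y2 assume y1: "y1\<in>?Dx" and y2: "y2\<in>?Dx"
    then obtain b1 b2 where b1: "b1\<in>?Bx" "le y1 b1" and b2: "b2 \<in> ?Bx" "le y2 b2" using key by blast
    then obtain b where b: "b\<in>?Bx" "le b1 b" "le b2 b" using dB unfolding directed_on_def by blast
    have "le y1 b" using tr[of y1 b1 b] y1 b1 b BD by auto
    moreover have "le y2 b" using tr[of y2 b2 b] y2 b2 b BD by auto
    ultimately show "\<exists>z\<in>?Dx. le y1 z \<and> le y2 z" using b BD by blast
  qed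
  show "is_lub_on D le ?Dx x"
    unfolding is_lub_on_def
  proof (intro conjI ballI impI)
    show "x \<in> D" by fact
    show "le y x" if "y \<in> ?Dx" for y using below that by blast
    fix v assume "v \<in> D" "\<forall>y\<in>?Dx. le y v"
    then show "le x v" using lB sub unfolding is_lub_on_def by blast
  qed
qed

definition wbx :: "'a::order \<Rightarrow> 'a \<Rightarrow> bool" where
  "wbx x y \<longleftrightarrow> way_below_on UNIV (\<le>) x y"

lemma po_univ: "partial_order_on_rel (UNIV::'a::order set) (\<le>)"
  by (auto simp: partial_order_on_rel_def)

lemma wbx_le: "wbx x y \<Longrightarrow> x \<le> y"
  using wb_le[OF po_univ] by (auto simp: wbx_def)

lemma wbx_trans_le: "wbx x y \<Longrightarrow> y \<le> z \<Longrightarrow> wbx x z"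
  unfolding wbx_def way_below_on_def by (meson order_trans UNIV_I)

lemma le_wbx: "x \<le> y \<Longrightarrow> wbx y z \<Longrightarrow> wbx x z"
  unfolding wbx_def way_below_on_def by (meson order_trans UNIV_I)

lemma X_cont:
  assumes C: "continuous_dcpo_on (UNIV :: 'a::order set) (\<le>)"
  shows "directed_on UNIV (\<le>) {b. wbx b (x::'a)}" "is_lub_on UNIV (\<le>) {b. wbx b x} x"
  using C unfolding continuous_dcpo_on_def basis_on_def wbx_def by auto

lemma interp:
  assumes C: "continuous_dcpo_on (UNIV :: 'a::order set) (\<le>)"
    and dS: "directed_on UNIV (\<le>) S" and lS: "is_lub_on UNIV (\<le>) S (u::'a)" and w: "wbx x u"
  shows "\<exists>s\<in>S. wbx x s"
proof -
  let ?T = "{w. \<exists>s\<in>S. wbx w s}"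
  have dT: "directed_on UNIV (\<le>) ?T"
    unfolding directed_on_def
  proof (intro conjI ballI)
    show "?T \<subseteq> UNIV" by simp
    obtain s where "s \<in> S" using dS unfolding directed_on_def by blast
    moreover obtain w where "wbx w s" using X_cont(1)[OF C, of s] unfolding directed_on_def by blast
    ultimately show "?T \<noteq> {}" by blast
    fix w1 w2 assume "w1 \<in> ?T" "w2 \<in> ?T"
    then obtain s1 s2 where s: "s1\<in>S" "wbx w1 s1" "s2\<in>S" "wbx w2 s2" by blast
    then obtain s3 where s3: "s3 \<in> S" "s1 \<le> s3" "s2 \<le> s3" using dS unfolding directed_on_def by blast
    have "wbx w1 s3" "wbx w2 s3" using s s3 wbx_trans_le by blast+
    then obtain w where "wbx w s3" "w1 \<le> w" "w2 \<le> w"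
      using X_cont(1)[OF C, of s3] unfolding directed_on_def by blast
    then show "\<exists>z\<in>?T. w1 \<le> z \<and> w2 \<le> z" using s3 by blast
  qed
  have lT: "is_lub_on UNIV (\<le>) ?T u"
    unfolding is_lub_on_def
  proof (intro conjI ballI impI)
    show "u \<in> UNIV" by simp
    show "w \<le> u" if "w \<in> ?T" for w
    proof -
      from that obtain s where "s \<in> S" "wbx w s" by blast
      moreover have "s \<le> u" using lS \<open>s \<in> S\<close> unfolding is_lub_on_def by blast
      ultimately show ?thesis using wbx_le order_trans by blast
    qed
    fix v assume v: "\<forall>w\<in>?T. w \<le> v"
    have "s \<le> v" if "s \<in> S" for s
      using X_cont(2)[OF C, of s] v that unfolding is_lub_on_def by blast
    then show "u \<le> v" using lS unfolding is_lub_on_def by blast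
  qed
  from w have "\<exists>t\<in>?T. x \<le> t" using dT lT unfolding wbx_def way_below_on_def by blast
  then show ?thesis using le_wbx by blast
qed

lemma LX_iff: "h \<in> LX \<longleftrightarrow> (\<forall>x y. x \<le> y \<longrightarrow> h x \<le> h y) \<and>
   (\<forall>S u. directed_on UNIV (\<le>) S \<and> is_lub_on UNIV (\<le>) S u \<longrightarrow> h u = (SUP s\<in>S. h s))"
  by (simp add: LX_def scott_cont_on_def)

lemma LX_mono: "h \<in> LX \<Longrightarrow> x \<le> y \<Longrightarrow> h x \<le> h y"
  by (simp add: LX_iff)

lemma LX_scott: "h \<in> LX \<Longrightarrow> directed_on UNIV (\<le>) S \<Longrightarrow> is_lub_on UNIV (\<le>) S u \<Longrightarrow> h u = (SUP s\<in>S. h s)"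
  by (simp add: LX_iff)

lemma directed_ne: "directed_on D le S \<Longrightarrow> S \<noteq> {}"
  by (simp add: directed_on_def)

lemma LX_SUP:
  fixes f :: "'i \<Rightarrow> 'a::order \<Rightarrow> ennreal"
  assumes "\<And>i. i \<in> I \<Longrightarrow> f i \<in> LX"
  shows "(\<lambda>z. SUP i\<in>I. f i z) \<in> LX"
  unfolding LX_iff
proof (intro conjI allI impI)
  fix x y :: "'a::order" assume "x \<le> y"
  then show "(SUP i\<in>I. f i x) \<le> (SUP i\<in>I. f i y)"
    using assms LX_mono by (intro SUP_mono) blast
next
  fix S and u :: "'a::order" assume a: "directed_on UNIV (\<le>) S \<and> is_lub_on UNIV (\<le>) S u"
  have "(SUP i\<in>I. f i u) = (SUP i\<in>I. SUP s\<in>S. f i s)"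
    using assms a LX_scott by (intro SUP_cong) auto
  also have "\<dots> = (SUP s\<in>S. SUP i\<in>I. f i s)" by (rule SUP_commute)
  finally show "(SUP i\<in>I. f i u) = (SUP s\<in>S. SUP i\<in>I. f i s)" .
qed

lemma LX_const: "(\<lambda>_. c) \<in> LX"
  unfolding LX_iff
proof (intro conjI allI impI)
  fix S and u :: "'a::order" assume a: "directed_on UNIV (\<le>) S \<and> is_lub_on UNIV (\<le>) S u"
  then have "S \<noteq> {}" by (simp add: directed_on_def)
  then show "c = (SUP s\<in>S. c)" by simp
qed simp

lemma LX_cmult: "h \<in> LX \<Longrightarrow> (\<lambda>z. a * h z) \<in> LX"
  unfolding LX_iff by (auto simp: SUP_mult_left_ennreal intro: mult_left_mono)

lemma LX_add:
  assumes h: "h \<in> LX" and g: "g \<in> LX"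
  shows "(\<lambda>z. h z + g z) \<in> LX"
  unfolding LX_iff
proof (intro conjI allI impI)
  fix x y :: "'a::order" assume "x \<le> y"
  then show "h x + g x \<le> h y + g y" using h g LX_mono add_mono by blast
next
  fix S and u :: "'a::order" assume a: "directed_on UNIV (\<le>) S \<and> is_lub_on UNIV (\<le>) S u"
  have "h u + g u = (SUP s\<in>S. h s) + (SUP s\<in>S. g s)" using a h g LX_scott by metis
  also have "\<dots> = (SUP s\<in>S. h s + g s)"
  proof (rule SUP_add_directed_ennreal[symmetric])
    fix i j assume "i \<in> S" "j \<in> S"
    then obtain k where "k \<in> S" "i \<le> k" "j \<le> k" using a unfolding directed_on_def by blast
    moreover have "h i \<le> h k" "g j \<le> g k" using h g LX_mono \<open>i \<le> k\<close> \<open>j \<le> k\<close> by auto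
    ultimately show "\<exists>k\<in>S. h i + g j \<le> h k + g k" by (meson add_mono)
  qed
  finally show "h u + g u = (SUP s\<in>S. h s + g s)" .
qed

lemma lub_LX:
  assumes "S \<subseteq> LX"
  shows "is_lub_on LX (\<le>) S (\<lambda>z. SUP h\<in>S. h z)"
  unfolding is_lub_on_def
proof (intro conjI ballI impI)
  show "(\<lambda>z. SUP h\<in>S. h z) \<in> LX" using assms by (intro LX_SUP) auto
  show "x \<le> (\<lambda>z. SUP h\<in>S. h z)" if "x \<in> S" for x using that by (auto simp: le_fun_def intro: SUP_upper)
  fix v assume "v \<in> LX" "\<forall>x\<in>S. x \<le> v"
  then show "(\<lambda>z. SUP h\<in>S. h z) \<le> v" by (auto simp: le_fun_def intro: SUP_least)
qed

lemma lub_LX_unique: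
  assumes "S \<subseteq> LX" "is_lub_on LX (\<le>) S u"
  shows "u = (\<lambda>z. SUP h\<in>S. h z)"
proof -
  have L: "is_lub_on LX (\<le>) S (\<lambda>z. SUP h\<in>S. h z)" by (rule lub_LX[OF assms(1)])
  have "u \<le> (\<lambda>z. SUP h\<in>S. h z)"
    using assms(2) L unfolding is_lub_on_def by blast
  moreover have "(\<lambda>z. SUP h\<in>S. h z) \<le> u"
    using assms(2) L unfolding is_lub_on_def by blast
  ultimately show ?thesis by (rule antisym)
qed

definition stepf :: "'a::order set \<Rightarrow> ('a \<Rightarrow> ennreal) \<Rightarrow> 'a \<Rightarrow> ennreal" where
  "stepf P c = (\<lambda>z. SUP x\<in>{x\<in>P. wbx x z}. c x)"

lemma stepf_LX:
  assumes C: "continuous_dcpo_on (UNIV :: 'a::order set) (\<le>)"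
  shows "stepf (P::'a set) c \<in> LX"
  unfolding LX_iff
proof (intro conjI allI impI)
  fix x y :: "'a::order" assume "x \<le> y"
  then show "stepf P c x \<le> stepf P c y" unfolding stepf_def
    by (intro SUP_subset_mono) (auto intro: wbx_trans_le)
next
  fix S and u :: "'a::order" assume a: "directed_on UNIV (\<le>) S \<and> is_lub_on UNIV (\<le>) S u"
  show "stepf P c u = (SUP s\<in>S. stepf P c s)"
  proof (rule antisym)
    show "stepf P c u \<le> (SUP s\<in>S. stepf P c s)"
      unfolding stepf_def
    proof (rule SUP_least)
      fix x assume "x \<in> {x\<in>P. wbx x u}"
      then obtain s where s: "s \<in> S" "wbx x s" using interp[OF C] a by blast
      then have "c x \<le> (SUP x\<in>{x\<in>P. wbx x s}. c x)" using \<open>x \<in> _\<close> by (intro SUP_upper) auto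
      also have "\<dots> \<le> (SUP s\<in>S. SUP x\<in>{x\<in>P. wbx x s}. c x)" using s by (intro SUP_upper) auto
      finally show "c x \<le> (SUP s\<in>S. SUP x\<in>{x\<in>P. wbx x s}. c x)" .
    qed
    show "(SUP s\<in>S. stepf P c s) \<le> stepf P c u"
    proof (rule SUP_least)
      fix s assume "s \<in> S"
      then have "s \<le> u" using a unfolding is_lub_on_def by blast
      then show "stepf P c s \<le> stepf P c u" unfolding stepf_def
        by (intro SUP_subset_mono) (auto intro: wbx_trans_le)
    qed
  qed
qed

lemma stepf_le:
  assumes "h \<in> LX" "\<And>x. x \<in> P \<Longrightarrow> c x \<le> h x"
  shows "stepf P c \<le> h"
  unfolding stepf_def le_fun_def
proof
  fix z show "(SUP x\<in>{x\<in>P. wbx x z}. c x) \<le> h z"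
  proof (rule SUP_least)
    fix x assume "x \<in> {x\<in>P. wbx x z}"
    then show "c x \<le> h z" using assms LX_mono wbx_le order_trans by blast
  qed
qed

lemma stepf_mono_c: "(\<And>x. x \<in> P \<Longrightarrow> c x \<le> c' x) \<Longrightarrow> stepf P c z \<le> stepf P c' z"
  unfolding stepf_def by (rule SUP_mono) auto

lemma stepf_mono_c':
  assumes "\<And>x. x \<in> P \<Longrightarrow> c x \<le> c' x" shows "stepf P c \<le> stepf P c'"
  by (rule le_funI, rule stepf_mono_c, rule assms)

lemma stepf_cmult: "stepf P (\<lambda>x. t * c x) = (\<lambda>z. t * stepf P c z)"
  unfolding stepf_def by (simp add: SUP_mult_left_ennreal)

lemma stepf_cong: "(\<And>x. x \<in> P \<Longrightarrow> c x = c' x) \<Longrightarrow> stepf P c = stepf P c'"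
  unfolding stepf_def by (intro ext SUP_cong) auto

lemma stepf_restrict:
  assumes "Q \<subseteq> P" "\<And>x. x \<in> P \<Longrightarrow> x \<notin> Q \<Longrightarrow> c x = 0"
  shows "stepf P c = stepf Q c"
  unfolding stepf_def
proof (intro ext antisym)
  fix z
  show "(SUP x\<in>{x\<in>P. wbx x z}. c x) \<le> (SUP x\<in>{x\<in>Q. wbx x z}. c x)"
  proof (rule SUP_least)
    fix x assume x: "x \<in> {x\<in>P. wbx x z}"
    show "c x \<le> (SUP x\<in>{x\<in>Q. wbx x z}. c x)"
    proof (cases "x \<in> Q")
      case True then show ?thesis using x by (intro SUP_upper) auto
    next
      case False then show ?thesis using x assms by simp
    qed
  qed
  show "(SUP x\<in>{x\<in>Q. wbx x z}. c x) \<le> (SUP x\<in>{x\<in>P. wbx x z}. c x)"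
    using assms(1) by (intro SUP_subset_mono) auto
qed

lemma stepf_insert_le: "stepf (insert x Q) c z \<le> stepf {x} c z + stepf Q c z"
  unfolding stepf_def
proof (rule SUP_least)
  fix y assume y: "y \<in> {y\<in>insert x Q. wbx y z}"
  show "c y \<le> (SUP y\<in>{y\<in>{x}. wbx y z}. c y) + (SUP y\<in>{y\<in>Q. wbx y z}. c y)"
  proof (cases "y = x")
    case True
    then have "c y \<le> (SUP y\<in>{y\<in>{x}. wbx y z}. c y)" using y by (intro SUP_upper) auto
    then show ?thesis by (rule add_increasing2[rotated]) simp
  next
    case False
    then have "c y \<le> (SUP y\<in>{y\<in>Q. wbx y z}. c y)" using y by (intro SUP_upper) auto
    then show ?thesis by (rule add_increasing[rotated]) simp
  qed
qed

lemma stepf_add_le: "stepf P (\<lambda>x. c x + c' x) z \<le> stepf P c z + stepf P c' z"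
  unfolding stepf_def
  by (rule SUP_least) (intro add_mono SUP_upper; auto)

lemma stepf_empty: "stepf {} c = (\<lambda>_. 0)"
  unfolding stepf_def by (simp add: bot_ennreal)



definition sublinP :: "'a set \<Rightarrow> (('a \<Rightarrow> real) \<Rightarrow> real) \<Rightarrow> bool" where
  "sublinP P \<Psi> \<longleftrightarrow>
    (\<forall>c c'. (\<forall>x\<in>P. c x = c' x) \<longrightarrow> \<Psi> c = \<Psi> c') \<and>
    (\<forall>c c'. (\<forall>x\<in>P. 0 \<le> c x \<and> c x \<le> c' x) \<longrightarrow> \<Psi> c \<le> \<Psi> c') \<and>
    (\<forall>c c'. (\<forall>x\<in>P. 0 \<le> c x \<and> 0 \<le> c' x) \<longrightarrow> \<Psi> (\<lambda>y. c y + c' y) \<le> \<Psi> c + \<Psi> c') \<and>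
    (\<forall>c t. (\<forall>x\<in>P. 0 \<le> c x) \<and> 0 \<le> t \<longrightarrow> \<Psi> (\<lambda>y. t * c y) = t * \<Psi> c)"

lemma sublinP_D:
  assumes "sublinP P \<Psi>"
  shows "\<And>c c'. (\<And>x. x\<in>P \<Longrightarrow> c x = c' x) \<Longrightarrow> \<Psi> c = \<Psi> c'"
    "\<And>c c'. (\<And>x. x\<in>P \<Longrightarrow> 0 \<le> c x) \<Longrightarrow> (\<And>x. x\<in>P \<Longrightarrow> c x \<le> c' x) \<Longrightarrow> \<Psi> c \<le> \<Psi> c'"
    "\<And>c c'. (\<And>x. x\<in>P \<Longrightarrow> 0 \<le> c x) \<Longrightarrow> (\<And>x. x\<in>P \<Longrightarrow> 0 \<le> c' x) \<Longrightarrow> \<Psi> (\<lambda>y. c y + c' y) \<le> \<Psi> c + \<Psi> c'"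
    "\<And>c t. (\<And>x. x\<in>P \<Longrightarrow> 0 \<le> c x) \<Longrightarrow> 0 \<le> t \<Longrightarrow> \<Psi> (\<lambda>y. t * c y) = t * \<Psi> c"
proof -
  have A: "\<forall>c c'. (\<forall>x\<in>P. c x = c' x) \<longrightarrow> \<Psi> c = \<Psi> c'" using assms unfolding sublinP_def by (rule conjunct1)
  have B: "\<forall>c c'. (\<forall>x\<in>P. 0 \<le> c x \<and> c x \<le> c' x) \<longrightarrow> \<Psi> c \<le> \<Psi> c'" using assms unfolding sublinP_def by (blast dest: conjunct2 conjunct1)
  have C: "\<forall>c c'. (\<forall>x\<in>P. 0 \<le> c x \<and> 0 \<le> c' x) \<longrightarrow> \<Psi> (\<lambda>y. c y + c' y) \<le> \<Psi> c + \<Psi> c'" using assms unfolding sublinP_def by (blast dest: conjunct2 conjunct1)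
  have D: "\<forall>c t. (\<forall>x\<in>P. 0 \<le> c x) \<and> 0 \<le> t \<longrightarrow> \<Psi> (\<lambda>y. t * c y) = t * \<Psi> c" using assms unfolding sublinP_def by (blast dest: conjunct2)
  show "\<And>c c'. (\<And>x. x\<in>P \<Longrightarrow> c x = c' x) \<Longrightarrow> \<Psi> c = \<Psi> c'"
    using A by blast
  show "\<And>c c'. (\<And>x. x\<in>P \<Longrightarrow> 0 \<le> c x) \<Longrightarrow> (\<And>x. x\<in>P \<Longrightarrow> c x \<le> c' x) \<Longrightarrow> \<Psi> c \<le> \<Psi> c'"
    using B by blast
  show "\<And>c c'. (\<And>x. x\<in>P \<Longrightarrow> 0 \<le> c x) \<Longrightarrow> (\<And>x. x\<in>P \<Longrightarrow> 0 \<le> c' x) \<Longrightarrow> \<Psi> (\<lambda>y. c y + c' y) \<le> \<Psi> c + \<Psi> c'"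
    using C by blast
  show "\<And>c t. (\<And>x. x\<in>P \<Longrightarrow> 0 \<le> c x) \<Longrightarrow> 0 \<le> t \<Longrightarrow> \<Psi> (\<lambda>y. t * c y) = t * \<Psi> c"
    using D by blast
qed

lemma sublinP_zero: "sublinP P \<Psi> \<Longrightarrow> \<Psi> (\<lambda>_. 0) = 0"
  using sublinP_D(4)[of P \<Psi> "\<lambda>_. 0" 0] by simp

lemma HB:
  assumes "finite P"
  shows "sublinP P \<Psi> \<Longrightarrow> (\<forall>x\<in>P. 0 \<le> c0 x) \<Longrightarrow>
    \<exists>a. (\<forall>x\<in>P. 0 \<le> a x) \<and> (\<forall>c. (\<forall>x\<in>P. 0 \<le> c x) \<longrightarrow> (\<Sum>x\<in>P. a x * c x) \<le> \<Psi> c)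
        \<and> (\<Sum>x\<in>P. a x * c0 x) = \<Psi> c0"
  using assms
proof (induction P arbitrary: \<Psi> c0 rule: finite_induct)
  case empty
  have z: "\<Psi> c = 0" for c
  proof -
    have "\<Psi> c = \<Psi> (\<lambda>_. 0)" using sublinP_D(1)[OF empty(1)] by auto
    then show ?thesis using sublinP_zero[OF empty(1)] by simp
  qed
  show ?case by (rule exI[of _ "\<lambda>_. 0"]) (simp add: z)
next
  case (insert x Q)
  note SL = insert.prems(1)
  note loc = sublinP_D(1)[OF SL] and mon = sublinP_D(2)[OF SL]
    and add = sublinP_D(3)[OF SL] and hom = sublinP_D(4)[OF SL]
  have c0nn: "\<And>y. y \<in> insert x Q \<Longrightarrow> 0 \<le> c0 y" using insert.prems(2) by blast
  define s0 where "s0 = c0 x"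
  define \<phi> where "\<phi> s = \<Psi> (c0(x:=s))" for s
  define e :: "'a \<Rightarrow> real" where "e = (\<lambda>_. 0)(x := 1)"
  have s0: "0 \<le> s0" using c0nn by (simp add: s0_def)
  have \<phi>s0: "\<phi> s0 = \<Psi> c0" by (simp add: \<phi>_def s0_def)
  have Psi0: "\<Psi> (\<lambda>_. 0) = 0" by (rule sublinP_zero[OF SL])
  have Pe: "0 \<le> \<Psi> e"
  proof -
    have "\<Psi> (\<lambda>_. 0) \<le> \<Psi> e" by (rule mon) (auto simp: e_def)
    then show ?thesis using Psi0 by simp
  qed
  have F1: "\<phi> s \<le> \<phi> s'" if "0 \<le> s" "s \<le> s'" for s s'
    unfolding \<phi>_def using that c0nn by (intro mon) auto
  have F2: "\<phi> s' \<le> \<phi> s + (s' - s) * \<Psi> e" if "0 \<le> s" "s \<le> s'" for s s'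
  proof -
    have eq: "c0(x:=s') = (\<lambda>y. (c0(x:=s)) y + (s' - s) * e y)"
      by (auto simp: e_def)
    have "\<phi> s' = \<Psi> (\<lambda>y. (c0(x:=s)) y + (\<lambda>y. (s' - s) * e y) y)"
      unfolding \<phi>_def by (rule arg_cong[where f=\<Psi>, OF eq])
    also have "\<Psi> (\<lambda>y. (c0(x:=s)) y + (\<lambda>y. (s' - s) * e y) y) \<le> \<Psi> (c0(x:=s)) + \<Psi> (\<lambda>y. (s' - s) * e y)"
      using that c0nn by (intro add) (auto simp: e_def)
    also have "\<Psi> (\<lambda>y. (s' - s) * e y) = (s' - s) * \<Psi> e"
      using that by (intro hom) (auto simp: e_def)
    finally show ?thesis unfolding \<phi>_def .
  qed
  have F3: "(s2 - s1) * \<phi> s \<le> (s2 - s) * \<phi> s1 + (s - s1) * \<phi> s2"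
    if "0 \<le> s1" "s1 < s" "s < s2" for s1 s s2
  proof -
    define l where "l = (s2 - s) / (s2 - s1)"
    define m where "m = (s - s1) / (s2 - s1)"
    have l0: "0 \<le> l" "0 \<le> m" using that by (auto simp: l_def m_def)
    have d: "s2 - s1 \<noteq> 0" using that by simp
    have lm: "l + m = 1" unfolding l_def m_def using d by (simp add: divide_simps)
    have lx: "l * s1 + m * s2 = s" unfolding l_def m_def using d by (simp add: divide_simps) (simp add: algebra_simps)
    have "\<Psi> (c0(x:=s)) = \<Psi> (\<lambda>y. (\<lambda>y. l * (c0(x:=s1)) y) y + (\<lambda>y. m * (c0(x:=s2)) y) y)"
    proof (rule loc)
      fix y assume "y \<in> insert x Q"
      show "(c0(x:=s)) y = (\<lambda>y. l * (c0(x:=s1)) y) y + (\<lambda>y. m * (c0(x:=s2)) y) y"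
      proof (cases "y = x")
        case True then show ?thesis using lx by simp
      next
        case False then show ?thesis using lm by (simp add: distrib_right[symmetric])
      qed
    qed
    also have "\<dots> \<le> \<Psi> (\<lambda>y. l * (c0(x:=s1)) y) + \<Psi> (\<lambda>y. m * (c0(x:=s2)) y)"
      using that c0nn l0 by (intro add) auto
    also have "\<dots> = l * \<phi> s1 + m * \<phi> s2"
    proof -
      have h1: "\<Psi> (\<lambda>y. l * (c0(x:=s1)) y) = l * \<Psi> (c0(x:=s1))"
        by (rule hom) (use that c0nn l0 in auto)
      have h2: "\<Psi> (\<lambda>y. m * (c0(x:=s2)) y) = m * \<Psi> (c0(x:=s2))"
        by (rule hom) (use that c0nn l0 in auto)
      show ?thesis by (simp only: h1 h2 \<phi>_def)
    qed
    finally have "\<phi> s \<le> l * \<phi> s1 + m * \<phi> s2" unfolding \<phi>_def .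
    then have "(s2 - s1) * \<phi> s \<le> (s2 - s1) * (l * \<phi> s1 + m * \<phi> s2)"
      using that by (intro mult_left_mono) auto
    also have "\<dots> = (s2 - s) * \<phi> s1 + (s - s1) * \<phi> s2"
      using d by (simp add: l_def m_def divide_simps)
    finally show ?thesis .
  qed
  define t where "t = (if s0 = 0 then 0 else Sup ((\<lambda>s. (\<phi> s0 - \<phi> s) / (s0 - s)) ` {0..<s0}))"
  have T: "0 \<le> t \<and> t \<le> \<Psi> e \<and> (\<forall>s\<ge>0. \<phi> s0 - s0 * t \<le> \<phi> s - s * t)"
  proof (cases "s0 = 0")
    case True
    then show ?thesis using Pe F1 by (simp add: t_def)
  next
    case False
    then have s0p: "0 < s0" using s0 by simp
    let ?SL = "(\<lambda>s. (\<phi> s0 - \<phi> s) / (s0 - s)) ` {0..<s0}"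
    have tdef: "t = Sup ?SL" using False by (simp add: t_def)
    have ne: "?SL \<noteq> {}" using s0p by auto
    have ub: "(\<phi> s0 - \<phi> s) / (s0 - s) \<le> \<Psi> e" if "0 \<le> s" "s < s0" for s
    proof -
      have "\<phi> s0 - \<phi> s \<le> (s0 - s) * \<Psi> e" using F2[of s s0] that by simp
      then show ?thesis using that by (simp add: divide_le_eq mult.commute)
    qed
    have bdd: "bdd_above ?SL" using ub by (auto intro!: bdd_aboveI[of _ "\<Psi> e"])
    have slope_le: "(\<phi> s0 - \<phi> s) / (s0 - s) \<le> t" if "0 \<le> s" "s < s0" for s
      unfolding tdef using that bdd by (intro cSup_upper) auto
    have t0: "0 \<le> t"
    proof -
      have "0 \<le> (\<phi> s0 - \<phi> 0) / (s0 - 0)" using F1[of 0 s0] s0p by simp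
      also have "\<dots> \<le> t" using slope_le[of 0] s0p by simp
      finally show ?thesis .
    qed
    have te: "t \<le> \<Psi> e" unfolding tdef using ne ub by (intro cSup_least) auto
    have T2: "\<phi> s0 - s0 * t \<le> \<phi> s - s * t" if "0 \<le> s" for s
    proof (cases "s < s0")
      case True
      have "(\<phi> s0 - \<phi> s) / (s0 - s) \<le> t" using slope_le that True by simp
      then have "\<phi> s0 - \<phi> s \<le> t * (s0 - s)" using True by (simp add: divide_le_eq)
      then show ?thesis by (simp add: algebra_simps)
    next
      case False
      show ?thesis
      proof (cases "s = s0")
        case True then show ?thesis by simp
      next
        case False
        with \<open>\<not> s < s0\<close> have ss: "s0 < s" by simp
        have "t \<le> (\<phi> s - \<phi> s0) / (s - s0)"
          unfolding tdef
        proof (rule cSup_least[OF ne])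
          fix v assume "v \<in> ?SL"
          then obtain s1 where s1: "0 \<le> s1" "s1 < s0" and v: "v = (\<phi> s0 - \<phi> s1) / (s0 - s1)" by auto
          have c: "(s - s1) * \<phi> s0 \<le> (s - s0) * \<phi> s1 + (s0 - s1) * \<phi> s" using F3[OF s1 ss] .
          have "(\<phi> s0 - \<phi> s1) * (s - s0) \<le> (\<phi> s - \<phi> s0) * (s0 - s1)"
            using c by (simp add: algebra_simps)
          then show "v \<le> (\<phi> s - \<phi> s0) / (s - s0)"
            unfolding v using s1 ss by (simp add: divide_simps)
        qed
        then have "t * (s - s0) \<le> \<phi> s - \<phi> s0" using ss by (simp add: le_divide_eq)
        then show ?thesis by (simp add: algebra_simps)
      qed
    qed
    show ?thesis using t0 te T2 by blast
  qed
  then have t0: "0 \<le> t" and te: "t \<le> \<Psi> e" and T2: "\<And>s. 0 \<le> s \<Longrightarrow> \<phi> s0 - s0 * t \<le> \<phi> s - s * t"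
    by auto
  define \<Phi> where "\<Phi> d = Inf ((\<lambda>s. \<Psi> (d(x:=s)) - s * t) ` {0..})" for d
  have lowb: "0 \<le> \<Psi> (d(x:=s)) - s * t" if "\<forall>y\<in>Q. 0 \<le> d y" "0 \<le> s" for d s
  proof -
    have "\<Psi> (\<lambda>y. s * e y) \<le> \<Psi> (d(x:=s))"
      using that insert.hyps(2) by (intro mon) (auto simp: e_def)
    moreover have "\<Psi> (\<lambda>y. s * e y) = s * \<Psi> e" using that by (intro hom) (auto simp: e_def)
    moreover have "s * t \<le> s * \<Psi> e" using that te by (intro mult_left_mono) auto
    ultimately show ?thesis by simp
  qed
  have P1: "\<Phi> d \<le> \<Psi> (d(x:=s)) - s * t" if "\<forall>y\<in>Q. 0 \<le> d y" "0 \<le> s" for d s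
    unfolding \<Phi>_def
  proof (rule cINF_lower)
    show "bdd_below ((\<lambda>s. \<Psi> (d(x:=s)) - s * t) ` {0..})"
      using lowb[OF that(1)] by (auto intro!: bdd_belowI[of _ 0])
    show "s \<in> {0..}" using that by simp
  qed
  have P2: "m \<le> \<Phi> d" if "\<And>s. 0 \<le> s \<Longrightarrow> m \<le> \<Psi> (d(x:=s)) - s * t" for d m
    unfolding \<Phi>_def by (rule cINF_greatest) (auto intro: that)
  have Phi_nn: "0 \<le> \<Phi> d" if "\<forall>y\<in>Q. 0 \<le> d y" for d
    using lowb[OF that] by (intro P2) auto
  have SLQ: "sublinP Q \<Phi>"
    unfolding sublinP_def
  proof (intro conjI allI impI)
    fix d d' :: "'a \<Rightarrow> real" assume a: "\<forall>y\<in>Q. d y = d' y"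
    have "(\<lambda>s. \<Psi> (d(x:=s)) - s * t) = (\<lambda>s. \<Psi> (d'(x:=s)) - s * t)"
    proof
      fix s show "\<Psi> (d(x:=s)) - s * t = \<Psi> (d'(x:=s)) - s * t"
        using a by (subst loc[of "d(x:=s)" "d'(x:=s)"]) auto
    qed
    then show "\<Phi> d = \<Phi> d'" unfolding \<Phi>_def by (rule arg_cong[where f = "\<lambda>f. Inf (f ` {0..})"])
  next
    fix d d' :: "'a \<Rightarrow> real" assume a: "\<forall>y\<in>Q. 0 \<le> d y \<and> d y \<le> d' y"
    show "\<Phi> d \<le> \<Phi> d'"
    proof (rule P2)
      fix s :: real assume s: "0 \<le> s"
      have "\<Phi> d \<le> \<Psi> (d(x:=s)) - s * t" using a s by (intro P1) auto
      also have "\<Psi> (d(x:=s)) \<le> \<Psi> (d'(x:=s))" using a s by (intro mon) auto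
      finally show "\<Phi> d \<le> \<Psi> (d'(x:=s)) - s * t" by simp
    qed
  next
    fix d d' :: "'a \<Rightarrow> real" assume a: "\<forall>y\<in>Q. 0 \<le> d y \<and> 0 \<le> d' y"
    have key: "\<Phi> (\<lambda>y. d y + d' y) \<le> (\<Psi> (d(x:=s)) - s * t) + (\<Psi> (d'(x:=s')) - s' * t)"
      if s: "0 \<le> s" "0 \<le> s'" for s s'
    proof -
      have "\<Phi> (\<lambda>y. d y + d' y) \<le> \<Psi> ((\<lambda>y. d y + d' y)(x := s + s')) - (s + s') * t"
        using a s by (intro P1) auto
      also have "(\<lambda>y. d y + d' y)(x := s + s') = (\<lambda>y. (d(x:=s)) y + (d'(x:=s')) y)" by auto
      also have "\<Psi> (\<lambda>y. (d(x:=s)) y + (d'(x:=s')) y) \<le> \<Psi> (d(x:=s)) + \<Psi> (d'(x:=s'))"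
        using a s by (intro add) auto
      finally show ?thesis by (simp add: algebra_simps)
    qed
    have "\<Phi> (\<lambda>y. d y + d' y) - (\<Psi> (d'(x:=s')) - s' * t) \<le> \<Phi> d" if "0 \<le> s'" for s'
      using key that by (intro P2) (simp add: algebra_simps)
    then have "\<Phi> (\<lambda>y. d y + d' y) - \<Phi> d \<le> \<Phi> d'"
      by (intro P2) (simp add: algebra_simps)
    then show "\<Phi> (\<lambda>y. d y + d' y) \<le> \<Phi> d + \<Phi> d'" by simp
  next
    fix d :: "'a \<Rightarrow> real" and r :: real assume a: "(\<forall>y\<in>Q. 0 \<le> d y) \<and> 0 \<le> r"
    show "\<Phi> (\<lambda>y. r * d y) = r * \<Phi> d"
    proof (cases "r = 0")
      case True
      have "\<Phi> (\<lambda>_. 0) \<le> \<Psi> ((\<lambda>_. 0)(x:=0)) - 0 * t" by (intro P1) auto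
      moreover have "(\<lambda>_. 0::real)(x:=0) = (\<lambda>_. 0)" by auto
      ultimately have "\<Phi> (\<lambda>_. 0) \<le> 0" using Psi0 by simp
      moreover have "0 \<le> \<Phi> (\<lambda>_. 0)" by (intro Phi_nn) auto
      ultimately show ?thesis using True by simp
    next
      case False
      then have r: "0 < r" using a by simp
      have rd: "\<forall>y\<in>Q. 0 \<le> r * d y" using a by simp
      have "\<Phi> (\<lambda>y. r * d y) / r \<le> \<Phi> d"
      proof (rule P2)
        fix s :: real assume s: "0 \<le> s"
        have "\<Phi> (\<lambda>y. r * d y) \<le> \<Psi> ((\<lambda>y. r * d y)(x := r * s)) - (r * s) * t"
          using rd s r by (intro P1) auto
        also have "(\<lambda>y. r * d y)(x := r * s) = (\<lambda>y. r * (d(x:=s)) y)" by auto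
        also have "\<Psi> (\<lambda>y. r * (d(x:=s)) y) = r * \<Psi> (d(x:=s))"
          using a s r by (intro hom) auto
        finally have "\<Phi> (\<lambda>y. r * d y) \<le> r * (\<Psi> (d(x:=s)) - s * t)" by (simp add: algebra_simps)
        then show "\<Phi> (\<lambda>y. r * d y) / r \<le> \<Psi> (d(x:=s)) - s * t"
          using r by (simp add: divide_le_eq mult.commute)
      qed
      moreover have "r * \<Phi> d \<le> \<Phi> (\<lambda>y. r * d y)"
      proof (rule P2)
        fix s :: real assume s: "0 \<le> s"
        have "\<Phi> d \<le> \<Psi> (d(x := s / r)) - (s / r) * t"
          using a s r by (intro P1) auto
        also have "d(x := s / r) = (\<lambda>y. (1/r) * ((\<lambda>y. r * d y)(x:=s)) y)" using r by auto
        also have "\<Psi> (\<lambda>y. (1/r) * ((\<lambda>y. r * d y)(x:=s)) y) = (1/r) * \<Psi> ((\<lambda>y. r * d y)(x:=s))"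
          using rd s r by (intro hom) auto
        finally have "\<Phi> d \<le> (\<Psi> ((\<lambda>y. r * d y)(x:=s)) - s * t) / r"
          using r by (simp add: field_simps)
        then show "r * \<Phi> d \<le> \<Psi> ((\<lambda>y. r * d y)(x:=s)) - s * t"
          using r by (simp add: le_divide_eq mult.commute)
      qed
      ultimately have "\<Phi> (\<lambda>y. r * d y) / r = \<Phi> d"
        using r by (simp add: divide_le_eq mult.commute)
      then show ?thesis using r by (simp add: field_simps)
    qed
  qed
  have c0Q: "\<forall>y\<in>Q. 0 \<le> c0 y" using c0nn by auto
  obtain a' where a'nn: "\<forall>y\<in>Q. 0 \<le> a' y"
    and a'le: "\<forall>c. (\<forall>y\<in>Q. 0 \<le> c y) \<longrightarrow> (\<Sum>y\<in>Q. a' y * c y) \<le> \<Phi> c"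
    and a'eq: "(\<Sum>y\<in>Q. a' y * c0 y) = \<Phi> c0"
    using insert.IH[OF SLQ c0Q] by blast
  define a where "a = a'(x := t)"
  have sumeq: "(\<Sum>y\<in>insert x Q. a y * c y) = t * c x + (\<Sum>y\<in>Q. a' y * c y)" for c
  proof -
    have "(\<Sum>y\<in>Q. a y * c y) = (\<Sum>y\<in>Q. a' y * c y)"
      using insert.hyps(2) by (intro sum.cong) (auto simp: a_def)
    then show ?thesis using insert.hyps by (simp add: a_def)
  qed
  have Phic0: "\<Phi> c0 = \<phi> s0 - s0 * t"
  proof (rule antisym)
    show "\<Phi> c0 \<le> \<phi> s0 - s0 * t" unfolding \<phi>_def using P1[OF c0Q s0] .
    show "\<phi> s0 - s0 * t \<le> \<Phi> c0" using T2 unfolding \<phi>_def by (intro P2) auto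
  qed
  show ?case
  proof (intro exI conjI allI impI ballI)
    fix y assume "y \<in> insert x Q" then show "0 \<le> a y" using a'nn t0 by (auto simp: a_def)
  next
    fix c :: "'a \<Rightarrow> real" assume c: "\<forall>y\<in>insert x Q. 0 \<le> c y"
    have "(\<Sum>y\<in>insert x Q. a y * c y) = t * c x + (\<Sum>y\<in>Q. a' y * c y)" by (rule sumeq)
    also have "\<dots> \<le> t * c x + \<Phi> c" using a'le c by auto
    also have "\<Phi> c \<le> \<Psi> (c(x := c x)) - c x * t" using c by (intro P1) auto
    finally show "(\<Sum>y\<in>insert x Q. a y * c y) \<le> \<Psi> c" by (simp add: algebra_simps)
  next
    have "(\<Sum>y\<in>insert x Q. a y * c0 y) = t * s0 + \<Phi> c0" using sumeq a'eq by (simp add: s0_def)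
    also have "\<dots> = \<Psi> c0" using Phic0 \<phi>s0 by (simp add: algebra_simps)
    finally show "(\<Sum>y\<in>insert x Q. a y * c0 y) = \<Psi> c0" .
  qed
qed



lemma fin_ub:
  assumes "finite G" "S \<noteq> {}" "\<forall>s1\<in>S. \<forall>s2\<in>S. \<exists>s3\<in>S. R s1 s3 \<and> R s2 s3"
    "\<forall>a b c. R a b \<longrightarrow> R b c \<longrightarrow> R a c" "\<forall>g\<in>G. \<sigma> g \<in> S"
  shows "\<exists>s\<in>S. \<forall>g\<in>G. R (\<sigma> g) s"
  using assms(1,5)
proof (induction G rule: finite_induct)
  case empty
  then show ?case using assms(2) by auto
next
  case (insert g G)
  then obtain s1 where s1: "s1 \<in> S" "\<forall>g\<in>G. R (\<sigma> g) s1" by auto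
  have "\<sigma> g \<in> S" using insert.prems by auto
  then obtain s3 where s3: "s3 \<in> S" "R s1 s3" "R (\<sigma> g) s3" using assms(3) s1 by blast
  have "\<forall>g'\<in>insert g G. R (\<sigma> g') s3" using s1 s3 assms(4) by blast
  then show ?case using s3 by blast
qed

lemma GRID:
  fixes \<psi> :: "'s \<Rightarrow> ('a \<Rightarrow> real) \<Rightarrow> ennreal"
  assumes P: "finite P" and ab: "\<forall>x\<in>P. 0 \<le> a x \<and> a x < b x" and Sne: "S \<noteq> {}"
    and dir: "\<forall>s1\<in>S. \<forall>s2\<in>S. \<exists>s3\<in>S. (\<forall>c. \<psi> s1 c \<le> \<psi> s3 c) \<and> (\<forall>c. \<psi> s2 c \<le> \<psi> s3 c)"
    and mono: "\<forall>s\<in>S. \<forall>c c'. (\<forall>x\<in>P. 0 \<le> c x \<and> c x \<le> c' x) \<longrightarrow> \<psi> s c \<le> \<psi> s c'"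
    and hom: "\<forall>s\<in>S. \<forall>c t. 0 < t \<longrightarrow> \<psi> s (\<lambda>x. t * c x) = ennreal t * \<psi> s c"
    and sup: "\<forall>c. (\<forall>x\<in>P. 0 \<le> c x) \<longrightarrow> ennreal (\<Sum>x\<in>P. b x * c x) \<le> (SUP s\<in>S. \<psi> s c)"
  shows "\<exists>s\<in>S. \<forall>c. (\<forall>x\<in>P. 0 \<le> c x) \<longrightarrow> ennreal (\<Sum>x\<in>P. a x * c x) \<le> \<psi> s c"
proof (cases "P = {}")
  case True
  then show ?thesis using Sne by auto
next
  case Pne: False
  define m where "m = Min ((\<lambda>x. b x - a x) ` P)"
  have m0: "0 < m" unfolding m_def using P Pne ab by (subst Min_gr_iff) auto
  have mle: "m \<le> b x - a x" if "x \<in> P" for x unfolding m_def using P that by (intro Min_le) auto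
  define B where "B = (\<Sum>x\<in>P. b x)"
  have B0: "0 \<le> B" unfolding B_def using ab by (intro sum_nonneg) (auto intro: order_trans[OF _ less_imp_le])
  define \<delta> where "\<delta> = m / (4 * (B + 1))"
  have \<delta>0: "0 < \<delta>" unfolding \<delta>_def using m0 B0 by simp
  have \<delta>B: "\<delta> * B \<le> m / 4"
  proof -
    have "\<delta> * B = (m / 4) * (B / (B + 1))" unfolding \<delta>_def using B0 by (simp add: field_simps)
    also have "\<dots> \<le> (m / 4) * 1" using m0 B0 by (intro mult_left_mono) auto
    finally show ?thesis by simp
  qed
  define \<eta> where "\<eta> = m / 4"
  define N where "N = nat \<lceil>1 / \<delta>\<rceil>"
  define G where "G = (\<Pi>\<^sub>E x\<in>P. (\<lambda>k. \<delta> * real k) ` {..N})"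
  have finG: "finite G" unfolding G_def using P by (intro finite_PiE) auto
  have Gnn: "\<forall>x\<in>P. 0 \<le> g x" if "g \<in> G" for g using that \<delta>0 unfolding G_def by (auto simp: PiE_def Pi_def)
  have ex: "\<exists>s\<in>S. ennreal ((\<Sum>x\<in>P. b x * g x) - \<eta>) \<le> \<psi> s g" if g: "g \<in> G" for g
  proof (cases "(\<Sum>x\<in>P. b x * g x) - \<eta> \<le> 0")
    case True
    then show ?thesis using Sne by (auto simp: ennreal_neg)
  next
    case False
    then have "ennreal ((\<Sum>x\<in>P. b x * g x) - \<eta>) < ennreal (\<Sum>x\<in>P. b x * g x)"
      using m0 by (subst ennreal_less_iff) (auto simp: \<eta>_def)
    also have "\<dots> \<le> (SUP s\<in>S. \<psi> s g)" using sup Gnn[OF g] by blast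
    finally show ?thesis by (auto simp: less_SUP_iff intro: less_imp_le)
  qed
  then have "\<forall>g\<in>G. \<exists>s. s \<in> S \<and> ennreal ((\<Sum>x\<in>P. b x * g x) - \<eta>) \<le> \<psi> s g" by blast
  then have "\<exists>\<sigma>. \<forall>g\<in>G. \<sigma> g \<in> S \<and> ennreal ((\<Sum>x\<in>P. b x * g x) - \<eta>) \<le> \<psi> (\<sigma> g) g"
    by (rule bchoice)
  then obtain \<sigma> where \<sigma>: "\<forall>g\<in>G. \<sigma> g \<in> S \<and> ennreal ((\<Sum>x\<in>P. b x * g x) - \<eta>) \<le> \<psi> (\<sigma> g) g"
    by blast
  obtain s where s: "s \<in> S" and sdom: "\<forall>g\<in>G. \<forall>c. \<psi> (\<sigma> g) c \<le> \<psi> s c"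
  proof -
    have transR: "\<forall>a b c. (\<forall>x. \<psi> a x \<le> \<psi> b x) \<longrightarrow> (\<forall>x. \<psi> b x \<le> \<psi> c x) \<longrightarrow> (\<forall>x. \<psi> a x \<le> \<psi> c x)"
      by (meson order_trans)
    have \<sigma>S: "\<forall>g\<in>G. \<sigma> g \<in> S" using \<sigma> by blast
    show ?thesis
      using fin_ub[where R="\<lambda>s t. \<forall>c. \<psi> s c \<le> \<psi> t c" and \<sigma>=\<sigma>, OF finG Sne dir transR \<sigma>S] that by blast
  qed
  show ?thesis
  proof (intro bexI[OF _ s] allI impI)
    fix c :: "'a \<Rightarrow> real" assume cnn: "\<forall>x\<in>P. 0 \<le> c x"
    show "ennreal (\<Sum>x\<in>P. a x * c x) \<le> \<psi> s c"
    proof (cases "\<forall>x\<in>P. c x = 0")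
      case True
      then show ?thesis by simp
    next
      case False
      define M where "M = Max (c ` P)"
      obtain x0 where x0: "x0 \<in> P" "c x0 = M" unfolding M_def using P Pne
        by (metis (no_types, lifting) Max_in empty_is_image finite_imageI imageE)
      have cM: "c x \<le> M" if "x \<in> P" for x unfolding M_def using P that by (intro Max_ge) auto
      obtain x1 where "x1 \<in> P" "c x1 \<noteq> 0" using False by blast
      then have M0: "0 < M" using cM[of x1] cnn by force
      define c' where "c' x = c x / M" for x
      have c'nn: "0 \<le> c' x" if "x \<in> P" for x using cnn that M0 by (simp add: c'_def)
      have c'1: "c' x \<le> 1" if "x \<in> P" for x using cM[OF that] M0 by (simp add: c'_def)
      have c'x0: "c' x0 = 1" using x0 M0 by (simp add: c'_def)
      define g where "g = restrict (\<lambda>x. \<delta> * real (nat \<lfloor>c' x / \<delta>\<rfloor>)) P"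
      have gx: "g x = \<delta> * of_int \<lfloor>c' x / \<delta>\<rfloor>" if "x \<in> P" for x
        using that c'nn[OF that] \<delta>0 by (simp add: g_def)
      have gle: "g x \<le> c' x" if "x \<in> P" for x
      proof -
        have "of_int \<lfloor>c' x / \<delta>\<rfloor> \<le> c' x / \<delta>" by (rule of_int_floor_le)
        then show ?thesis using gx[OF that] \<delta>0 by (simp add: le_divide_eq mult.commute)
      qed
      have gge: "c' x - \<delta> \<le> g x" if "x \<in> P" for x
      proof -
        have "c' x / \<delta> - 1 \<le> of_int \<lfloor>c' x / \<delta>\<rfloor>" by linarith
        then have "\<delta> * (c' x / \<delta> - 1) \<le> \<delta> * of_int \<lfloor>c' x / \<delta>\<rfloor>" using \<delta>0 by (intro mult_left_mono) auto
        then show ?thesis using gx[OF that] \<delta>0 by (simp add: algebra_simps)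
      qed
      have gnn: "0 \<le> g x" if "x \<in> P" for x using gx[OF that] c'nn[OF that] \<delta>0 by simp
      have gG: "g \<in> G"
        unfolding G_def g_def
      proof (subst restrict_PiE, intro Pi_I)
        fix x assume x: "x \<in> P"
        have "c' x / \<delta> \<le> 1 / \<delta>" using c'1[OF x] \<delta>0 by (simp add: divide_right_mono)
        then have "\<lfloor>c' x / \<delta>\<rfloor> \<le> \<lceil>1 / \<delta>\<rceil>" by (meson floor_le_ceiling order_trans floor_mono)
        then have "nat \<lfloor>c' x / \<delta>\<rfloor> \<le> N" unfolding N_def by (simp add: nat_mono)
        then show "\<delta> * real (nat \<lfloor>c' x / \<delta>\<rfloor>) \<in> (\<lambda>k. \<delta> * real k) ` {..N}" by auto
      qed
      have sum2: "(\<Sum>x\<in>P. b x * c' x) - \<delta> * B \<le> (\<Sum>x\<in>P. b x * g x)"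
      proof -
        have "(\<Sum>x\<in>P. b x * c' x) - \<delta> * B = (\<Sum>x\<in>P. b x * (c' x - \<delta>))"
          unfolding B_def by (simp add: algebra_simps sum_subtractf sum_distrib_left)
        also have "\<dots> \<le> (\<Sum>x\<in>P. b x * g x)"
          using ab gge by (intro sum_mono mult_left_mono) (auto intro: order_trans[OF _ less_imp_le])
        finally show ?thesis .
      qed
      have sum3: "m \<le> (\<Sum>x\<in>P. b x * c' x) - (\<Sum>x\<in>P. a x * c' x)"
      proof -
        have "m \<le> (b x0 - a x0) * c' x0" using mle[OF x0(1)] c'x0 by simp
        also have "\<dots> \<le> (\<Sum>x\<in>P. (b x - a x) * c' x)"
          using P x0 ab c'nn by (intro member_le_sum) auto
        also have "\<dots> = (\<Sum>x\<in>P. b x * c' x) - (\<Sum>x\<in>P. a x * c' x)"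
          by (simp add: algebra_simps sum_subtractf)
        finally show ?thesis .
      qed
      have key: "(\<Sum>x\<in>P. a x * c' x) \<le> (\<Sum>x\<in>P. b x * g x) - \<eta>"
        using sum2 sum3 \<delta>B m0 unfolding \<eta>_def by linarith
      have ceq: "c = (\<lambda>x. M * c' x)" using M0 by (auto simp: c'_def)
      have "ennreal (\<Sum>x\<in>P. a x * c x) = ennreal M * ennreal (\<Sum>x\<in>P. a x * c' x)"
        using M0 ab c'nn
        by (subst ennreal_mult[symmetric]) (auto intro!: sum_nonneg simp: ceq sum_distrib_left algebra_simps)
      also have "\<dots> \<le> ennreal M * ennreal ((\<Sum>x\<in>P. b x * g x) - \<eta>)"
        using key by (intro mult_left_mono ennreal_leI) auto
      also have "\<dots> \<le> ennreal M * \<psi> (\<sigma> g) g" using \<sigma> gG by (intro mult_left_mono) auto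
      also have "\<dots> \<le> ennreal M * \<psi> s g" using sdom gG by (intro mult_left_mono) auto
      also have "\<dots> \<le> ennreal M * \<psi> s c'"
        using mono s gnn gle by (intro mult_left_mono) auto
      also have "\<dots> = \<psi> s (\<lambda>x. M * c' x)" using hom s M0 by simp
      also have "\<dots> = \<psi> s c" using ceq by simp
      finally show ?thesis .
    qed
  qed
qed



lemma hpD:
  assumes "F \<in> hoare_prev"
  shows hp_mono: "\<And>h h'. h \<in> LX \<Longrightarrow> h' \<in> LX \<Longrightarrow> h \<le> h' \<Longrightarrow> F h \<le> F h'"
    and hp_scott: "\<And>H u. directed_on LX (\<le>) H \<Longrightarrow> is_lub_on LX (\<le>) H u \<Longrightarrow> F u = (SUP h\<in>H. F h)"
    and hp_hom: "\<And>h a. h \<in> LX \<Longrightarrow> a \<noteq> \<infinity> \<Longrightarrow> F (\<lambda>x. a * h x) = a * F h"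
    and hp_add: "\<And>h h'. h \<in> LX \<Longrightarrow> h' \<in> LX \<Longrightarrow> F (\<lambda>x. h x + h' x) \<le> F h + F h'"
    and hp_out: "\<And>h. h \<notin> LX \<Longrightarrow> F h = 0"
proof -
  have A: "scott_cont_on LX (\<le>) F" using assms by (simp add: hoare_prev_def)
  show "\<And>h h'. h \<in> LX \<Longrightarrow> h' \<in> LX \<Longrightarrow> h \<le> h' \<Longrightarrow> F h \<le> F h'"
    using A by (simp add: scott_cont_on_def)
  show "\<And>H u. directed_on LX (\<le>) H \<Longrightarrow> is_lub_on LX (\<le>) H u \<Longrightarrow> F u = (SUP h\<in>H. F h)"
    using A by (simp add: scott_cont_on_def)
  show "\<And>h a. h \<in> LX \<Longrightarrow> a \<noteq> \<infinity> \<Longrightarrow> F (\<lambda>x. a * h x) = a * F h"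
    using assms by (simp add: hoare_prev_def)
  show "\<And>h h'. h \<in> LX \<Longrightarrow> h' \<in> LX \<Longrightarrow> F (\<lambda>x. h x + h' x) \<le> F h + F h'"
    using assms by (simp add: hoare_prev_def)
  show "\<And>h. h \<notin> LX \<Longrightarrow> F h = 0"
    using assms by (simp add: hoare_prev_def)
qed

lemma hp_zero: "F \<in> hoare_prev \<Longrightarrow> F (\<lambda>_. 0) = 0"
  using hp_hom[of F "\<lambda>_. 0" 0] LX_const[of 0] by simp

lemma hp_scott':
  assumes F: "F \<in> hoare_prev" and S: "S \<subseteq> LX" "S \<noteq> {}"
    and dir: "\<And>h1 h2. h1 \<in> S \<Longrightarrow> h2 \<in> S \<Longrightarrow> \<exists>h3\<in>S. h1 \<le> h3 \<and> h2 \<le> h3"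
  shows "F (\<lambda>z. SUP h\<in>S. h z) = (SUP h\<in>S. F h)"
proof (rule hp_scott[OF F])
  show "directed_on LX (\<le>) S" unfolding directed_on_def using S dir by blast
  show "is_lub_on LX (\<le>) S (\<lambda>z. SUP h\<in>S. h z)" using lub_LX[OF S(1)] .
qed

lemma po_prev:
  fixes D :: "(('a::order \<Rightarrow> ennreal) \<Rightarrow> ennreal) set"
  assumes "D \<subseteq> hoare_prev"
  shows "partial_order_on_rel D prev_le"
  unfolding partial_order_on_rel_def
proof (intro conjI ballI impI)
  fix x assume "x \<in> D" then show "prev_le x x" by (simp add: prev_le_def)
next
  fix x y z :: "('a \<Rightarrow> ennreal) \<Rightarrow> ennreal"
  assume "prev_le x y \<and> prev_le y z" then show "prev_le x z"
    unfolding prev_le_def by (meson order_trans)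
next
  fix x y :: "('a \<Rightarrow> ennreal) \<Rightarrow> ennreal"
  assume xy: "x \<in> D" "y \<in> D" and le: "prev_le x y \<and> prev_le y x"
  have xh: "x \<in> hoare_prev" "y \<in> hoare_prev" using xy assms by auto
  show "x = y"
  proof
    fix h show "x h = y h"
    proof (cases "h \<in> LX")
      case True
      then have "x h \<le> y h" "y h \<le> x h" using le unfolding prev_le_def by auto
      then show ?thesis by (rule antisym)
    next
      case False
      then have "x h = 0" "y h = 0" using hp_out[OF xh(1)] hp_out[OF xh(2)] by auto
      then show ?thesis by simp
    qed
  qed
qed

definition supG :: "(('a::order \<Rightarrow> ennreal) \<Rightarrow> ennreal) set \<Rightarrow> ('a \<Rightarrow> ennreal) \<Rightarrow> ennreal" where
  "supG S = (\<lambda>h. if h \<in> LX then SUP F\<in>S. F h else 0)"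

lemma supG_hp:
  fixes S :: "(('a::order \<Rightarrow> ennreal) \<Rightarrow> ennreal) set"
  assumes S: "S \<subseteq> hoare_prev"
  shows "supG S \<in> hoare_prev"
  unfolding hoare_prev_def
proof (intro CollectI conjI ballI allI impI)
  show "scott_cont_on LX (\<le>) (supG S)"
    unfolding scott_cont_on_def
  proof (intro conjI ballI allI impI)
    fix h h' :: "'a \<Rightarrow> ennreal" assume h: "h \<in> LX" "h' \<in> LX" "h \<le> h'"
    then show "supG S h \<le> supG S h'" unfolding supG_def
      using S by (auto intro!: SUP_mono hp_mono)
  next
    fix H and u :: "'a \<Rightarrow> ennreal" assume a: "directed_on LX (\<le>) H \<and> is_lub_on LX (\<le>) H u"
    have HL: "H \<subseteq> LX" and u: "u \<in> LX" using a by (auto simp: directed_on_def is_lub_on_def)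
    have "supG S u = (SUP F\<in>S. F u)" using u by (simp add: supG_def)
    also have "\<dots> = (SUP F\<in>S. SUP h\<in>H. F h)"
      using a S by (intro SUP_cong refl) (auto intro: hp_scott)
    also have "\<dots> = (SUP h\<in>H. SUP F\<in>S. F h)" by (rule SUP_commute)
    also have "\<dots> = (SUP h\<in>H. supG S h)" using HL by (intro SUP_cong) (auto simp: supG_def)
    finally show "supG S u = (SUP h\<in>H. supG S h)" .
  qed
next
  fix h :: "'a \<Rightarrow> ennreal" and a :: ennreal assume h: "h \<in> LX" and a: "a \<noteq> \<infinity>"
  have "supG S (\<lambda>x. a * h x) = (SUP F\<in>S. F (\<lambda>x. a * h x))" using LX_cmult[OF h] by (simp add: supG_def)
  also have "\<dots> = (SUP F\<in>S. a * F h)" using S h a by (intro SUP_cong) (auto intro: hp_hom)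
  also have "\<dots> = a * supG S h" using h by (simp add: supG_def SUP_mult_left_ennreal)
  finally show "supG S (\<lambda>x. a * h x) = a * supG S h" .
next
  fix h h' :: "'a \<Rightarrow> ennreal" assume h: "h \<in> LX" "h' \<in> LX"
  have "supG S (\<lambda>x. h x + h' x) = (SUP F\<in>S. F (\<lambda>x. h x + h' x))" using LX_add[OF h] by (simp add: supG_def)
  also have "\<dots> \<le> (SUP F\<in>S. F h) + (SUP F\<in>S. F h')"
  proof (rule SUP_least)
    fix F assume "F \<in> S"
    then have "F (\<lambda>x. h x + h' x) \<le> F h + F h'" using S h hp_add by blast
    also have "\<dots> \<le> (SUP F\<in>S. F h) + (SUP F\<in>S. F h')"
      using \<open>F \<in> S\<close> by (intro add_mono SUP_upper)
    finally show "F (\<lambda>x. h x + h' x) \<le> (SUP F\<in>S. F h) + (SUP F\<in>S. F h')" .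
  qed
  also have "\<dots> = supG S h + supG S h'" using h by (simp add: supG_def)
  finally show "supG S (\<lambda>x. h x + h' x) \<le> supG S h + supG S h'" .
next
  fix h :: "'a \<Rightarrow> ennreal" assume "h \<notin> LX" then show "supG S h = 0" by (simp add: supG_def)
qed

lemma LX_1plus: "h \<in> LX \<Longrightarrow> (\<lambda>x. 1 + h x) \<in> LX"
  using LX_add[OF LX_const] by blast

lemma supG_sub:
  fixes S :: "(('a::order \<Rightarrow> ennreal) \<Rightarrow> ennreal) set"
  assumes S: "S \<subseteq> hoare_prev_sub"
  shows "supG S \<in> hoare_prev_sub"
proof -
  have S': "S \<subseteq> hoare_prev" using S by (auto simp: hoare_prev_sub_def)
  have "supG S (\<lambda>x. 1 + h x) \<le> 1 + supG S h" if h: "h \<in> LX" for h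
  proof -
    have "supG S (\<lambda>x. 1 + h x) = (SUP F\<in>S. F (\<lambda>x. 1 + h x))" using LX_1plus[OF h] by (simp add: supG_def)
    also have "\<dots> \<le> 1 + (SUP F\<in>S. F h)"
    proof (rule SUP_least)
      fix F assume "F \<in> S"
      then have "F (\<lambda>x. 1 + h x) \<le> 1 + F h" using S h by (auto simp: hoare_prev_sub_def)
      also have "\<dots> \<le> 1 + (SUP F\<in>S. F h)" using \<open>F \<in> S\<close> by (intro add_mono SUP_upper) auto
      finally show "F (\<lambda>x. 1 + h x) \<le> 1 + (SUP F\<in>S. F h)" .
    qed
    also have "\<dots> = 1 + supG S h" using h by (simp add: supG_def)
    finally show ?thesis .
  qed
  then show ?thesis using supG_hp[OF S'] by (simp add: hoare_prev_sub_def)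
qed

lemma supG_norm:
  fixes S :: "(('a::order \<Rightarrow> ennreal) \<Rightarrow> ennreal) set"
  assumes S: "S \<subseteq> hoare_prev_norm" "S \<noteq> {}"
  shows "supG S \<in> hoare_prev_norm"
proof -
  have S': "S \<subseteq> hoare_prev" using S by (auto simp: hoare_prev_norm_def)
  have "supG S (\<lambda>x. 1 + h x) = 1 + supG S h" if h: "h \<in> LX" for h
  proof -
    have "supG S (\<lambda>x. 1 + h x) = (SUP F\<in>S. F (\<lambda>x. 1 + h x))" using LX_1plus[OF h] by (simp add: supG_def)
    also have "\<dots> = (SUP F\<in>S. 1 + F h)" using S h by (intro SUP_cong) (auto simp: hoare_prev_norm_def)
    also have "\<dots> = 1 + (SUP F\<in>S. F h)" using S(2) by (simp add: ennreal_SUP_add_right)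
    also have "\<dots> = 1 + supG S h" using h by (simp add: supG_def)
    finally show ?thesis .
  qed
  then show ?thesis using supG_hp[OF S'] by (simp add: hoare_prev_norm_def)
qed

definition closedD :: "(('a::order \<Rightarrow> ennreal) \<Rightarrow> ennreal) set \<Rightarrow> bool" where
  "closedD D \<longleftrightarrow> D \<subseteq> hoare_prev \<and> (\<forall>S. S \<subseteq> D \<and> S \<noteq> {} \<longrightarrow> supG S \<in> D)"

lemma closed_hp: "closedD hoare_prev"
  unfolding closedD_def using supG_hp by blast

lemma closed_sub: "closedD hoare_prev_sub"
  unfolding closedD_def using supG_sub by (auto simp: hoare_prev_sub_def)

lemma closed_norm: "closedD hoare_prev_norm"
  unfolding closedD_def using supG_norm by (auto simp: hoare_prev_norm_def)

lemma supG_lub: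
  assumes D: "closedD D" and S: "S \<subseteq> D" "S \<noteq> {}"
  shows "is_lub_on D prev_le S (supG S)"
  unfolding is_lub_on_def
proof (intro conjI ballI impI)
  show "supG S \<in> D" using D S unfolding closedD_def by blast
  show "prev_le F (supG S)" if "F \<in> S" for F
    using that unfolding prev_le_def supG_def by (auto intro: SUP_upper)
  fix v assume "v \<in> D" "\<forall>F\<in>S. prev_le F v"
  then show "prev_le (supG S) v" unfolding prev_le_def supG_def by (auto intro: SUP_least)
qed

lemma lub_le_supG:
  assumes D: "closedD D" and dS: "directed_on D prev_le S" and l: "is_lub_on D prev_le S u"
  shows "\<forall>h\<in>LX. u h \<le> (SUP F\<in>S. F h)"
proof -
  have S: "S \<subseteq> D" "S \<noteq> {}" using dS unfolding directed_on_def by auto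
  have "supG S \<in> D" using D S unfolding closedD_def by blast
  moreover have "\<forall>F\<in>S. prev_le F (supG S)" using supG_lub[OF D S] unfolding is_lub_on_def by blast
  ultimately have "prev_le u (supG S)" using l unfolding is_lub_on_def by blast
  then show ?thesis unfolding prev_le_def supG_def by auto
qed

lemma dcpo_closed:
  assumes D: "closedD D"
  shows "dcpo_on D prev_le"
  unfolding dcpo_on_def
proof (intro conjI allI impI)
  show "partial_order_on_rel D prev_le" using D po_prev unfolding closedD_def by blast
  fix S assume "directed_on D prev_le S"
  then have "S \<subseteq> D" "S \<noteq> {}" unfolding directed_on_def by auto
  then show "\<exists>u. is_lub_on D prev_le S u" using supG_lub[OF D] by blast
qed

definition lin :: "(ennreal \<times> 'a) list \<Rightarrow> ('a \<Rightarrow> ennreal) \<Rightarrow> ennreal" where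
  "lin row h = (\<Sum>(a, x)\<leftarrow>row. a * h x)"

definition rsum :: "(ennreal \<times> 'a) list \<Rightarrow> ennreal" where
  "rsum row = (\<Sum>(a, x)\<leftarrow>row. a)"

lemma lin_Cons: "lin ((a, x) # row) h = a * h x + lin row h"
  by (simp add: lin_def)

lemma lin_Nil: "lin [] h = 0" by (simp add: lin_def)

lemma rsum_Cons: "rsum ((a, x) # row) = a + rsum row" by (simp add: rsum_def)
lemma rsum_Nil: "rsum [] = 0" by (simp add: rsum_def)

lemma simple_hoare_eq:
  "simple_hoare rows h = (if h \<in> LX then Max ((\<lambda>row. lin row h) ` set rows) else 0)"
  by (simp add: simple_hoare_def lin_def)

lemma lin_mono: "(\<And>x. h x \<le> h' x) \<Longrightarrow> lin row h \<le> lin row h'"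
  by (induction row) (auto simp: lin_Nil lin_Cons intro!: add_mono mult_left_mono)

lemma lin_cmult: "lin row (\<lambda>z. c * h z) = c * lin row h"
  by (induction row) (auto simp: lin_Nil lin_Cons algebra_simps)

lemma lin_add: "lin row (\<lambda>z. h z + h' z) = lin row h + lin row h'"
  by (induction row) (auto simp: lin_Nil lin_Cons algebra_simps)

lemma lin_1plus: "lin row (\<lambda>z. 1 + h z) = rsum row + lin row h"
  by (induction row) (auto simp: lin_Nil lin_Cons rsum_Nil rsum_Cons algebra_simps)

lemma lin_SUP:
  assumes H: "H \<noteq> {}" and dir: "\<And>h1 h2. h1 \<in> H \<Longrightarrow> h2 \<in> H \<Longrightarrow> \<exists>h3\<in>H. h1 \<le> h3 \<and> h2 \<le> h3"
  shows "lin row (\<lambda>z. SUP h\<in>H. h z) = (SUP h\<in>H. lin row h)"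
proof (induction row)
  case Nil then show ?case using H by (simp add: lin_Nil)
next
  case (Cons p row)
  obtain a x where p: "p = (a, x)" by (cases p)
  have "lin (p # row) (\<lambda>z. SUP h\<in>H. h z) = (SUP h\<in>H. a * h x) + (SUP h\<in>H. lin row h)"
    using Cons by (simp add: p lin_Cons SUP_mult_left_ennreal)
  also have "\<dots> = (SUP h\<in>H. a * h x + lin row h)"
  proof (rule SUP_add_directed_ennreal[symmetric])
    fix i j assume "i \<in> H" "j \<in> H"
    then obtain k where k: "k \<in> H" "i \<le> k" "j \<le> k" using dir by blast
    have "a * i x \<le> a * k x" using k by (intro mult_left_mono) (auto simp: le_fun_def)
    moreover have "lin row j \<le> lin row k" using k by (intro lin_mono) (auto simp: le_fun_def)
    ultimately show "\<exists>k\<in>H. a * i x + lin row j \<le> a * k x + lin row k" using k by (meson add_mono)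
  qed
  also have "\<dots> = (SUP h\<in>H. lin (p # row) h)" by (simp add: p lin_Cons)
  finally show ?case .
qed

lemma Max_img_mono:
  fixes f g :: "'i \<Rightarrow> 'b::linorder"
  assumes "finite I" "I \<noteq> {}" "\<And>i. i \<in> I \<Longrightarrow> f i \<le> g i"
  shows "Max (f ` I) \<le> Max (g ` I)"
  using assms by (subst Max_le_iff) (auto intro: order_trans[OF _ Max_ge])

lemma sh_hp:
  fixes rows :: "(ennreal \<times> 'a::order) list list"
  assumes ne: "rows \<noteq> []"
  shows "simple_hoare rows \<in> hoare_prev"
proof -
  let ?I = "set rows"
  have I: "finite ?I" "?I \<noteq> {}" using ne by auto
  let ?M = "\<lambda>h. Max ((\<lambda>row. lin row h) ` ?I)"
  have Mmono: "?M h \<le> ?M h'" if "h \<le> h'" for h h'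
    using I that by (intro Max_img_mono lin_mono) (auto simp: le_fun_def)
  show ?thesis
    unfolding hoare_prev_def
  proof (intro CollectI conjI ballI allI impI)
    show "scott_cont_on LX (\<le>) (simple_hoare rows)"
      unfolding scott_cont_on_def
    proof (intro conjI ballI allI impI)
      fix h h' :: "'a \<Rightarrow> ennreal" assume "h \<in> LX" "h' \<in> LX" "h \<le> h'"
      then show "simple_hoare rows h \<le> simple_hoare rows h'" using Mmono by (simp add: simple_hoare_eq)
    next
      fix H and u :: "'a \<Rightarrow> ennreal" assume a: "directed_on LX (\<le>) H \<and> is_lub_on LX (\<le>) H u"
      have HL: "H \<subseteq> LX" "H \<noteq> {}" and u: "u \<in> LX" using a by (auto simp: directed_on_def is_lub_on_def)
      have dir: "\<And>h1 h2. h1 \<in> H \<Longrightarrow> h2 \<in> H \<Longrightarrow> \<exists>h3\<in>H. h1 \<le> h3 \<and> h2 \<le> h3"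
        using a unfolding directed_on_def by blast
      have ueq: "u = (\<lambda>z. SUP h\<in>H. h z)" using lub_LX_unique HL a by blast
      have "?M u \<le> (SUP h\<in>H. ?M h)"
      proof (subst Max_le_iff)
        show "finite ((\<lambda>row. lin row u) ` ?I)" "(\<lambda>row. lin row u) ` ?I \<noteq> {}" using I by auto
        show "\<forall>v\<in>(\<lambda>row. lin row u) ` ?I. v \<le> (SUP h\<in>H. ?M h)"
        proof
          fix v assume "v \<in> (\<lambda>row. lin row u) ` ?I"
          then obtain row where row: "row \<in> ?I" "v = lin row u" by blast
          have "v = (SUP h\<in>H. lin row h)" using row ueq lin_SUP[OF HL(2) dir] by simp
          also have "\<dots> \<le> (SUP h\<in>H. ?M h)" using I row by (intro SUP_mono) (auto intro!: Max_ge)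
          finally show "v \<le> (SUP h\<in>H. ?M h)" .
        qed
      qed
      moreover have "(SUP h\<in>H. ?M h) \<le> ?M u"
      proof (rule SUP_least)
        fix h assume "h \<in> H" then have "h \<le> u" using a unfolding is_lub_on_def by blast
        then show "?M h \<le> ?M u" by (rule Mmono)
      qed
      ultimately have "?M u = (SUP h\<in>H. ?M h)" by (rule antisym)
      moreover have "(SUP h\<in>H. simple_hoare rows h) = (SUP h\<in>H. ?M h)"
        using HL by (intro SUP_cong) (auto simp: simple_hoare_eq)
      ultimately show "simple_hoare rows u = (SUP h\<in>H. simple_hoare rows h)"
        using u by (simp add: simple_hoare_eq)
    qed
  next
    fix h :: "'a \<Rightarrow> ennreal" and c :: ennreal assume h: "h \<in> LX" and c: "c \<noteq> \<infinity>"
    have "?M (\<lambda>x. c * h x) = Max (((*) c) ` ((\<lambda>row. lin row h) ` ?I))"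
      by (simp add: lin_cmult image_image)
    also have "\<dots> = c * ?M h"
      using I by (intro mono_Max_commute[symmetric]) (auto simp: mono_def intro: mult_left_mono)
    finally show "simple_hoare rows (\<lambda>x. c * h x) = c * simple_hoare rows h"
      using h LX_cmult[OF h] by (simp add: simple_hoare_eq)
  next
    fix h h' :: "'a \<Rightarrow> ennreal" assume h: "h \<in> LX" "h' \<in> LX"
    have "?M (\<lambda>x. h x + h' x) \<le> ?M h + ?M h'"
      using I by (subst Max_le_iff) (auto simp: lin_add intro!: add_mono Max_ge)
    then show "simple_hoare rows (\<lambda>x. h x + h' x) \<le> simple_hoare rows h + simple_hoare rows h'"
      using h LX_add[OF h] by (simp add: simple_hoare_eq)
  next
    fix h :: "'a \<Rightarrow> ennreal" assume "h \<notin> LX" then show "simple_hoare rows h = 0" by (simp add: simple_hoare_eq)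
  qed
qed

lemma sh_sub:
  assumes ne: "rows \<noteq> []" and rs: "\<forall>row\<in>set rows. rsum row \<le> 1"
  shows "simple_hoare rows \<in> hoare_prev_sub"
proof -
  have I: "finite (set rows)" "set rows \<noteq> {}" using ne by auto
  have "simple_hoare rows (\<lambda>x. 1 + h x) \<le> 1 + simple_hoare rows h" if h: "h \<in> LX" for h
  proof -
    have "Max ((\<lambda>row. lin row (\<lambda>x. 1 + h x)) ` set rows) \<le> 1 + Max ((\<lambda>row. lin row h) ` set rows)"
      using I rs by (subst Max_le_iff) (auto simp: lin_1plus intro!: add_mono Max_ge)
    then show ?thesis using h LX_1plus[OF h] by (simp add: simple_hoare_eq)
  qed
  then show ?thesis using sh_hp[OF ne] by (simp add: hoare_prev_sub_def)
qed

lemma sh_norm: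
  assumes ne: "rows \<noteq> []" and rs: "\<forall>row\<in>set rows. rsum row = 1"
  shows "simple_hoare rows \<in> hoare_prev_norm"
proof -
  have I: "finite (set rows)" "set rows \<noteq> {}" using ne by auto
  have "simple_hoare rows (\<lambda>x. 1 + h x) = 1 + simple_hoare rows h" if h: "h \<in> LX" for h
  proof -
    have "Max ((\<lambda>row. lin row (\<lambda>x. 1 + h x)) ` set rows) = Max (((+) 1) ` ((\<lambda>row. lin row h) ` set rows))"
      using rs by (simp add: lin_1plus image_image cong: image_cong)
    also have "\<dots> = 1 + Max ((\<lambda>row. lin row h) ` set rows)"
      using I by (intro mono_Max_commute[symmetric]) (auto simp: mono_def)
    finally show ?thesis using h LX_1plus[OF h] by (simp add: simple_hoare_eq)
  qed
  then show ?thesis using sh_hp[OF ne] by (simp add: hoare_prev_norm_def)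
qed



lemma enn2real_add: "a < top \<Longrightarrow> b < top \<Longrightarrow> enn2real (a + b) = enn2real a + enn2real b"
  by (cases a; cases b) (auto simp del: ennreal_plus simp add: ennreal_plus[symmetric])

lemma top_of_bound:
  fixes y :: ennreal
  assumes a: "0 < a" and b: "\<And>n::nat. ennreal (a * real n) \<le> y"
  shows "y = top"
proof (rule ccontr)
  assume "y \<noteq> top"
  then obtain R where R: "0 \<le> R" "y = ennreal R" by (cases y) auto
  obtain n :: nat where n: "R / a < real n" using reals_Archimedean2 by blast
  then have "R < a * real n" using a by (simp add: divide_less_eq mult.commute)
  moreover have "a * real n \<le> R" using b[of n] R a by simp
  ultimately show False by simp
qed

lemma stepf_sum_bound:
  assumes C: "continuous_dcpo_on (UNIV :: 'a::order set) (\<le>)" and F: "F \<in> hoare_prev"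
    and P: "finite (P::'a set)"
  shows "F (stepf P c) \<le> (\<Sum>x\<in>P. F (stepf {x} c))"
  using P
proof (induction P rule: finite_induct)
  case empty
  then show ?case using hp_zero[OF F] by (simp add: stepf_empty)
next
  case (insert x Q)
  have "F (stepf (insert x Q) c) \<le> F (\<lambda>z. stepf {x} c z + stepf Q c z)"
    using stepf_insert_le[of x Q c]
    by (intro hp_mono[OF F] stepf_LX[OF C] LX_add) (auto simp: le_fun_def)
  also have "\<dots> \<le> F (stepf {x} c) + F (stepf Q c)"
    by (intro hp_add[OF F] stepf_LX[OF C])
  also have "\<dots> \<le> F (stepf {x} c) + (\<Sum>x\<in>Q. F (stepf {x} c))"
    using insert.IH by (intro add_mono) auto
  finally show ?case using insert.hyps by simp
qed

lemma stepf_single_scale: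
  "stepf {x} (\<lambda>y. ennreal (c y)) = (\<lambda>z. ennreal (c x) * stepf {x} (\<lambda>_. 1) z)"
proof -
  have "stepf {x} (\<lambda>y. ennreal (c y)) = stepf {x} (\<lambda>y. ennreal (c x) * 1)"
    by (rule stepf_cong) simp
  also have "\<dots> = (\<lambda>z. ennreal (c x) * stepf {x} (\<lambda>_. 1) z)" by (rule stepf_cmult)
  finally show ?thesis .
qed

lemma step_approx:
  assumes C: "continuous_dcpo_on (UNIV :: 'a::order set) (\<le>)" and F: "F \<in> hoare_prev"
    and h: "h \<in> LX" and r: "r < F h"
  shows "\<exists>P c. finite (P::'a set) \<and> (\<forall>x\<in>P. 0 \<le> c x \<and> ennreal (c x) \<le> h x)
           \<and> r < F (stepf P (\<lambda>x. ennreal (c x)))"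
proof -
  define D where "D = {stepf P (\<lambda>x. ennreal (c x)) | P c. finite (P::'a set) \<and> (\<forall>x\<in>P. 0 \<le> c x \<and> ennreal (c x) \<le> h x)}"
  have DL: "D \<subseteq> LX" unfolding D_def using stepf_LX[OF C] by blast
  have Dne: "D \<noteq> {}" unfolding D_def by blast
  have dir: "\<exists>g3\<in>D. g1 \<le> g3 \<and> g2 \<le> g3" if gg: "g1 \<in> D" "g2 \<in> D" for g1 g2
  proof -
    obtain P1 c1 where 1: "g1 = stepf P1 (\<lambda>x. ennreal (c1 x))" "finite P1" "\<forall>x\<in>P1. 0 \<le> c1 x \<and> ennreal (c1 x) \<le> h x"
      using gg(1) unfolding D_def by blast
    obtain P2 c2 where 2: "g2 = stepf P2 (\<lambda>x. ennreal (c2 x))" "finite P2" "\<forall>x\<in>P2. 0 \<le> c2 x \<and> ennreal (c2 x) \<le> h x"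
      using gg(2) unfolding D_def by blast
    define c3 where "c3 x = max (if x \<in> P1 then c1 x else 0) (if x \<in> P2 then c2 x else 0)" for x
    have c3: "\<forall>x\<in>P1 \<union> P2. 0 \<le> c3 x \<and> ennreal (c3 x) \<le> h x"
      using 1 2 by (auto simp: c3_def max_def)
    have g3: "stepf (P1 \<union> P2) (\<lambda>x. ennreal (c3 x)) \<in> D" unfolding D_def using 1 2 c3 by blast
    have "g1 \<le> stepf (P1 \<union> P2) (\<lambda>x. ennreal (c3 x))"
      unfolding 1 stepf_def le_fun_def
      by (intro allI SUP_mono) (force simp: c3_def intro: ennreal_leI)
    moreover have "g2 \<le> stepf (P1 \<union> P2) (\<lambda>x. ennreal (c3 x))"
      unfolding 2 stepf_def le_fun_def
      by (intro allI SUP_mono) (force simp: c3_def intro: ennreal_leI)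
    ultimately show ?thesis using g3 by blast
  qed
  have hsup: "(\<lambda>z. SUP g\<in>D. g z) = h"
  proof (rule ext, rule antisym)
    fix z
    show "(SUP g\<in>D. g z) \<le> h z"
    proof (rule SUP_least)
      fix g assume "g \<in> D"
      then obtain P c where "g = stepf P (\<lambda>x. ennreal (c x))" "\<forall>x\<in>P. ennreal (c x) \<le> h x"
        unfolding D_def by blast
      then show "g z \<le> h z" using stepf_le[OF h] by (auto simp: le_fun_def)
    qed
    have "h z = (SUP x\<in>{b. wbx b z}. h x)" using LX_scott[OF h X_cont[OF C]] .
    also have "\<dots> \<le> (SUP g\<in>D. g z)"
    proof (rule SUP_least)
      fix x assume x: "x \<in> {b. wbx b z}"
      show "h x \<le> (SUP g\<in>D. g z)"
      proof (rule dense_le)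
        fix y assume y: "y < h x"
        then have "y \<noteq> top" by auto
        then obtain q where q: "0 \<le> q" "y = ennreal q" by (cases y) auto
        have gD: "stepf {x} (\<lambda>_. ennreal q) \<in> D" unfolding D_def using q y
          by (intro CollectI exI[of _ "{x}"] exI[of _ "\<lambda>_. q"]) auto
        have "stepf {x} (\<lambda>_. ennreal q) z = ennreal q"
        proof -
          have "{x'\<in>{x}. wbx x' z} = {x}" using x by auto
          then show ?thesis by (simp add: stepf_def)
        qed
        then show "y \<le> (SUP g\<in>D. g z)" using gD q by (metis SUP_upper)
      qed
    qed
    finally show "h z \<le> (SUP g\<in>D. g z)" .
  qed
  have "F h = (SUP g\<in>D. F g)"
    using hp_scott'[OF F DL Dne dir] hsup by simp
  with r obtain g where "g \<in> D" "r < F g" by (auto simp: less_SUP_iff)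
  then show ?thesis unfolding D_def by blast
qed

lemma LIN:
  assumes C: "continuous_dcpo_on (UNIV :: 'a::order set) (\<le>)" and F: "F \<in> hoare_prev"
    and P: "finite (P::'a set)" and a: "\<forall>x\<in>P. 0 \<le> a x"
    and dom: "\<forall>c. (\<forall>x\<in>P. 0 \<le> c x) \<longrightarrow> ennreal (\<Sum>x\<in>P. a x * c x) \<le> F (stepf P (\<lambda>x. ennreal (c x)))"
    and h: "h \<in> LX"
  shows "(\<Sum>x\<in>P. ennreal (a x) * h x) \<le> F h"
proof (cases "\<exists>x\<in>P. 0 < a x \<and> h x = top")
  case True
  then obtain x where x: "x \<in> P" "0 < a x" "h x = top" by blast
  have "ennreal (a x * real n) \<le> F h" for n :: nat
  proof -
    define c where "c y = (if y = x then real n else 0)" for y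
    have cnn: "\<forall>y\<in>P. 0 \<le> c y" by (simp add: c_def)
    have "(\<Sum>y\<in>P. a y * c y) = a x * real n"
      using P x(1) by (simp add: c_def if_distrib cong: if_cong)
    then have "ennreal (a x * real n) \<le> F (stepf P (\<lambda>y. ennreal (c y)))" using dom cnn by metis
    also have "\<dots> \<le> F h"
      using x by (intro hp_mono[OF F] stepf_LX[OF C] h stepf_le[OF h]) (auto simp: c_def)
    finally show ?thesis .
  qed
  then have "F h = top" using top_of_bound[OF x(2)] by blast
  then show ?thesis by simp
next
  case False
  define c where "c y = enn2real (h y)" for y
  have eq: "ennreal (a x) * h x = ennreal (a x * c x)" if "x \<in> P" for x
  proof (cases "h x = top")
    case True then have "a x = 0" using False a that by force
    then show ?thesis by simp
  next
    case False then show ?thesis using a that by (simp add: c_def ennreal_mult less_top)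
  qed
  have "(\<Sum>x\<in>P. ennreal (a x) * h x) = ennreal (\<Sum>x\<in>P. a x * c x)"
    using a by (simp add: eq c_def sum_nonneg)
  also have "\<dots> \<le> F (stepf P (\<lambda>x. ennreal (c x)))" using dom by (simp add: c_def)
  also have "\<dots> \<le> F h"
  proof (intro hp_mono[OF F] stepf_LX[OF C] h stepf_le[OF h])
    fix x show "ennreal (c x) \<le> h x" by (cases "h x") (auto simp: c_def)
  qed
  finally show ?thesis .
qed



lemma normD: "F \<in> hoare_prev_norm \<Longrightarrow> F \<in> hoare_prev"
  and normD1: "F \<in> hoare_prev_norm \<Longrightarrow> h \<in> LX \<Longrightarrow> F (\<lambda>x. 1 + h x) = 1 + F h"
  by (auto simp: hoare_prev_norm_def)

lemma subD: "F \<in> hoare_prev_sub \<Longrightarrow> F \<in> hoare_prev"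
  and subD1: "F \<in> hoare_prev_sub \<Longrightarrow> h \<in> LX \<Longrightarrow> F (\<lambda>x. 1 + h x) \<le> 1 + F h"
  by (auto simp: hoare_prev_sub_def)

lemma normC:
  assumes F: "F \<in> hoare_prev_norm" and k: "k \<in> LX" and m: "0 \<le> m"
  shows "F (\<lambda>z. ennreal m + k z) = ennreal m + F k"
proof (cases "m = 0")
  case True then show ?thesis by simp
next
  case False
  then have m0: "0 < m" using m by simp
  define k' where "k' z = ennreal (1/m) * k z" for z
  have k'L: "k' \<in> LX" unfolding k'_def using LX_cmult[OF k] .
  have mm: "ennreal m * ennreal (1/m) = 1" using m0 by (simp add: ennreal_mult[symmetric])
  have eq: "(\<lambda>z. ennreal m + k z) = (\<lambda>z. ennreal m * (1 + k' z))"
  proof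
    fix z
    have "ennreal m * (1 + k' z) = ennreal m + (ennreal m * ennreal (1/m)) * k z"
      by (simp add: k'_def distrib_left mult.assoc)
    then show "ennreal m + k z = ennreal m * (1 + k' z)" using mm by simp
  qed
  have "F (\<lambda>z. ennreal m * (1 + k' z)) = ennreal m * F (\<lambda>z. 1 + k' z)"
    using hp_hom[OF normD[OF F] LX_1plus[OF k'L]] by simp
  also have "\<dots> = ennreal m * (1 + F k')" using normD1[OF F k'L] by simp
  also have "F k' = ennreal (1/m) * F k" unfolding k'_def using hp_hom[OF normD[OF F] k] by simp
  also have "ennreal m * (1 + ennreal (1/m) * F k) = ennreal m + (ennreal m * ennreal (1/m)) * F k"
    by (simp add: distrib_left mult.assoc)
  finally show ?thesis using eq mm by simp
qed

lemma norm_const: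
  assumes F: "F \<in> hoare_prev_norm" and m: "0 \<le> m"
  shows "F (\<lambda>_. ennreal m) = ennreal m"
  using normC[OF F LX_const[of 0] m] hp_zero[OF normD[OF F]] by simp

lemma norm_least:
  assumes F: "F \<in> hoare_prev_norm" and bt: "\<forall>x. b0 \<le> x" and h: "h \<in> LX"
  shows "h b0 \<le> F h"
proof (cases "h b0 = top")
  case True
  have ht: "h z = top" for z using LX_mono[OF h, of b0 z] bt True by (auto simp: top_unique)
  have "ennreal (1 * real n) \<le> F h" for n :: nat
  proof -
    have "ennreal (1 * real n) = F (\<lambda>_. ennreal (real n))" using norm_const[OF F] by simp
    also have "\<dots> \<le> F h" using ht by (intro hp_mono[OF normD[OF F]] LX_const h) (auto simp: le_fun_def)
    finally show ?thesis .
  qed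
  then have "F h = top" using top_of_bound[of 1] by simp
  then show ?thesis by simp
next
  case False
  define m where "m = enn2real (h b0)"
  have hb: "h b0 = ennreal m" using False by (simp add: m_def less_top)
  have m0: "0 \<le> m" by (simp add: m_def)
  have "h b0 = F (\<lambda>_. ennreal m)" using norm_const[OF F m0] hb by simp
  also have "\<dots> \<le> F h"
  proof (intro hp_mono[OF normD[OF F]] LX_const h le_funI)
    fix x show "ennreal m \<le> h x" using hb bt LX_mono[OF h, of b0 x] by simp
  qed
  finally show ?thesis .
qed

lemma normlin:
  assumes C: "continuous_dcpo_on (UNIV :: 'a::order set) (\<le>)" and G: "G \<in> hoare_prev_norm"
    and P: "finite (P::'a set)" and a: "\<forall>x\<in>P. 0 \<le> a x" and sa: "(\<Sum>x\<in>P. a x) \<le> 1"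
    and bt: "\<forall>x. b0 \<le> x"
    and dom: "\<forall>c. (\<forall>x\<in>P. 0 \<le> c x) \<longrightarrow> ennreal (\<Sum>x\<in>P. a x * c x) \<le> G (stepf P (\<lambda>x. ennreal (c x)))"
    and h: "h \<in> LX"
  shows "ennreal (1 - (\<Sum>x\<in>P. a x)) * h b0 + (\<Sum>x\<in>P. ennreal (a x) * h x) \<le> G h"
proof -
  have Gh: "G \<in> hoare_prev" using normD[OF G] .
  show ?thesis
  proof (cases "h b0 = top")
    case True
    then have "G h = top" using norm_least[OF G bt h] by (simp add: top_unique)
    then show ?thesis by simp
  next
    case hbf: False
    show ?thesis
    proof (cases "\<exists>x\<in>P. 0 < a x \<and> h x = top")
      case True
      then obtain x where x: "x \<in> P" "0 < a x" "h x = top" by blast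
      have "(\<Sum>x\<in>P. ennreal (a x) * h x) = top" using P x by (subst ennreal_sum_eq_top) (auto intro!: bexI[of _ x] simp: ennreal_mult_top)
      then have "G h = top" using LIN[OF C Gh P a dom h] by (simp add: top_unique)
      then show ?thesis by simp
    next
      case False
      define m where "m = enn2real (h b0)"
      have hb: "h b0 = ennreal m" using hbf by (simp add: m_def less_top)
      have m0: "0 \<le> m" by (simp add: m_def)
      have hge: "h b0 \<le> h x" for x using LX_mono[OF h] bt by blast
      define c where "c x = (if h x = top then 0 else enn2real (h x) - m)" for x
      have cnn: "0 \<le> c x" for x
      proof (cases "h x = top")
        case False
        then have "enn2real (h b0) \<le> enn2real (h x)" using hge by (intro enn2real_mono) (auto simp: less_top)
        then show ?thesis using False by (simp add: c_def m_def)
      qed (simp add: c_def)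
      have hxe: "h x = ennreal (m + c x)" if "h x \<noteq> top" for x
        using that by (simp add: c_def less_top)
      define k where "k = stepf P (\<lambda>x. ennreal (c x))"
      have kL: "k \<in> LX" unfolding k_def by (rule stepf_LX[OF C])
      have kle: "(\<lambda>z. ennreal m + k z) \<le> h"
      proof (rule le_funI)
        fix z
        show "ennreal m + k z \<le> h z"
        proof (cases "{x\<in>P. wbx x z} = {}")
          case True
          then have "k z = 0" unfolding k_def stepf_def by (simp only: SUP_empty) (simp add: bot_ennreal)
          then show ?thesis using hb hge by simp
        next
          case ne: False
          have "ennreal m + k z = (SUP x\<in>{x\<in>P. wbx x z}. ennreal m + ennreal (c x))"
            unfolding k_def stepf_def using ne by (simp add: ennreal_SUP_add_right)
          also have "\<dots> \<le> h z"
          proof (rule SUP_least)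
            fix x assume x: "x \<in> {x\<in>P. wbx x z}"
            show "ennreal m + ennreal (c x) \<le> h z"
            proof (cases "h x = top")
              case True then show ?thesis using hb hge by (simp add: c_def)
            next
              case False
              then have "ennreal m + ennreal (c x) = h x" using hxe[OF False] m0 cnn by simp
              also have "\<dots> \<le> h z" using x LX_mono[OF h] wbx_le by blast
              finally show ?thesis .
            qed
          qed
          finally show ?thesis .
        qed
      qed
      have "ennreal m + ennreal (\<Sum>x\<in>P. a x * c x) \<le> ennreal m + G k"
        using dom cnn by (auto simp: k_def intro: add_mono)
      also have "\<dots> = G (\<lambda>z. ennreal m + k z)" using normC[OF G kL m0] by simp
      also have "\<dots> \<le> G h" using kle by (intro hp_mono[OF Gh] LX_add LX_const kL h)
      finally have main: "ennreal m + ennreal (\<Sum>x\<in>P. a x * c x) \<le> G h" .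
      have each: "ennreal (a x) * h x = ennreal (a x * (m + c x))" if "x \<in> P" for x
      proof (cases "h x = top")
        case True then have "a x = 0" using False a that by force
        then show ?thesis by simp
      next
        case f: False then show ?thesis using hxe[OF f] a that by (simp add: ennreal_mult')
      qed
      have "(\<Sum>x\<in>P. ennreal (a x) * h x) = (\<Sum>x\<in>P. ennreal (a x * (m + c x)))"
        using each by (rule sum.cong[OF refl])
      also have "\<dots> = ennreal (\<Sum>x\<in>P. a x * (m + c x))"
        using a m0 cnn by (intro sum_ennreal) auto
      finally have S: "(\<Sum>x\<in>P. ennreal (a x) * h x) = ennreal (\<Sum>x\<in>P. a x * (m + c x))" .
      have R: "(1 - (\<Sum>x\<in>P. a x)) * m + (\<Sum>x\<in>P. a x * (m + c x)) = m + (\<Sum>x\<in>P. a x * c x)"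
        by (simp add: algebra_simps sum.distrib sum_distrib_left sum_distrib_right)
      have nn1: "0 \<le> (1 - (\<Sum>x\<in>P. a x)) * m" using sa m0 by simp
      have nn2: "0 \<le> (\<Sum>x\<in>P. a x * (m + c x))" using a m0 cnn by (intro sum_nonneg) auto
      have nn3: "0 \<le> (\<Sum>x\<in>P. a x * c x)" using a cnn by (intro sum_nonneg) auto
      have "ennreal (1 - (\<Sum>x\<in>P. a x)) * h b0 + (\<Sum>x\<in>P. ennreal (a x) * h x)
          = ennreal ((1 - (\<Sum>x\<in>P. a x)) * m) + ennreal (\<Sum>x\<in>P. a x * (m + c x))"
        using hb S sa m0 by (simp add: ennreal_mult)
      also have "\<dots> = ennreal ((1 - (\<Sum>x\<in>P. a x)) * m + (\<Sum>x\<in>P. a x * (m + c x)))"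
        using nn1 nn2 by simp
      also have "\<dots> = ennreal m + ennreal (\<Sum>x\<in>P. a x * c x)" using R m0 nn3 by simp
      finally show ?thesis using main by simp
    qed
  qed
qed

lemma wb_crit:
  assumes C: "continuous_dcpo_on (UNIV :: 'a::order set) (\<le>)" and D: "closedD D"
    and F: "F \<in> D" and s: "s \<in> D" and P: "finite (P::'a set)"
    and ab: "\<forall>x\<in>P. 0 \<le> a x \<and> a x < b x"
    and bdom: "\<forall>c. (\<forall>x\<in>P. 0 \<le> c x) \<longrightarrow> ennreal (\<Sum>x\<in>P. b x * c x) \<le> F (stepf P (\<lambda>x. ennreal (c x)))"
    and sdom: "\<forall>G\<in>D. (\<forall>c. (\<forall>x\<in>P. 0 \<le> c x) \<longrightarrow> ennreal (\<Sum>x\<in>P. a x * c x) \<le> G (stepf P (\<lambda>x. ennreal (c x)))) \<longrightarrow> prev_le s G"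
  shows "way_below_on D prev_le s F"
  unfolding way_below_on_def
proof (intro conjI allI impI)
  show "s \<in> D" "F \<in> D" by fact+
  fix S u assume a: "directed_on D prev_le S \<and> is_lub_on D prev_le S u \<and> prev_le F u"
  have SD: "S \<subseteq> D" "S \<noteq> {}" using a unfolding directed_on_def by auto
  have Dh: "D \<subseteq> hoare_prev" using D unfolding closedD_def by blast
  have Sh: "\<And>G. G \<in> S \<Longrightarrow> G \<in> hoare_prev" using SD Dh by blast
  define \<psi> where "\<psi> G c = G (stepf P (\<lambda>x. ennreal (c x)))" for G :: "('a \<Rightarrow> ennreal) \<Rightarrow> ennreal" and c :: "'a \<Rightarrow> real"
  have "\<exists>G\<in>S. \<forall>c. (\<forall>x\<in>P. 0 \<le> c x) \<longrightarrow> ennreal (\<Sum>x\<in>P. a x * c x) \<le> \<psi> G c"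
  proof (rule GRID[OF P ab SD(2)])
    show "\<forall>s1\<in>S. \<forall>s2\<in>S. \<exists>s3\<in>S. (\<forall>c. \<psi> s1 c \<le> \<psi> s3 c) \<and> (\<forall>c. \<psi> s2 c \<le> \<psi> s3 c)"
    proof (intro ballI)
      fix s1 s2 assume "s1 \<in> S" "s2 \<in> S"
      then obtain s3 where "s3 \<in> S" "prev_le s1 s3" "prev_le s2 s3" using a unfolding directed_on_def by blast
      then show "\<exists>s3\<in>S. (\<forall>c. \<psi> s1 c \<le> \<psi> s3 c) \<and> (\<forall>c. \<psi> s2 c \<le> \<psi> s3 c)"
        unfolding \<psi>_def prev_le_def using stepf_LX[OF C] by blast
    qed
    show "\<forall>s\<in>S. \<forall>c c'. (\<forall>x\<in>P. 0 \<le> c x \<and> c x \<le> c' x) \<longrightarrow> \<psi> s c \<le> \<psi> s c'"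
    proof (intro ballI allI impI)
      fix G and c c' :: "'a \<Rightarrow> real" assume G: "G \<in> S" and le: "\<forall>x\<in>P. 0 \<le> c x \<and> c x \<le> c' x"
      show "\<psi> G c \<le> \<psi> G c'"
        unfolding \<psi>_def
      proof (rule hp_mono[OF Sh[OF G] stepf_LX[OF C] stepf_LX[OF C]])
        show "stepf P (\<lambda>x. ennreal (c x)) \<le> stepf P (\<lambda>x. ennreal (c' x))"
          by (rule stepf_mono_c') (use le in \<open>auto intro: ennreal_leI\<close>)
      qed
    qed
    show "\<forall>s\<in>S. \<forall>c t. 0 < t \<longrightarrow> \<psi> s (\<lambda>x. t * c x) = ennreal t * \<psi> s c"
    proof (intro ballI allI impI)
      fix G c and t :: real assume G: "G \<in> S" and t: "0 < t"
      have "stepf P (\<lambda>x. ennreal (t * c x)) = stepf P (\<lambda>x. ennreal t * ennreal (c x))"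
        using t by (intro stepf_cong) (simp add: ennreal_mult')
      also have "\<dots> = (\<lambda>z. ennreal t * stepf P (\<lambda>x. ennreal (c x)) z)" by (rule stepf_cmult)
      finally show "\<psi> G (\<lambda>x. t * c x) = ennreal t * \<psi> G c"
        unfolding \<psi>_def using hp_hom[OF Sh[OF G] stepf_LX[OF C]] by simp
    qed
    show "\<forall>c. (\<forall>x\<in>P. 0 \<le> c x) \<longrightarrow> ennreal (\<Sum>x\<in>P. b x * c x) \<le> (SUP s\<in>S. \<psi> s c)"
    proof (intro allI impI)
      fix c :: "'a \<Rightarrow> real" assume c: "\<forall>x\<in>P. 0 \<le> c x"
      have "ennreal (\<Sum>x\<in>P. b x * c x) \<le> F (stepf P (\<lambda>x. ennreal (c x)))" using bdom c by blast
      also have "\<dots> \<le> u (stepf P (\<lambda>x. ennreal (c x)))" using a stepf_LX[OF C] unfolding prev_le_def by blast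
      also have "\<dots> \<le> (SUP G\<in>S. G (stepf P (\<lambda>x. ennreal (c x))))"
        using lub_le_supG[OF D] a stepf_LX[OF C] by blast
      finally show "ennreal (\<Sum>x\<in>P. b x * c x) \<le> (SUP s\<in>S. \<psi> s c)" unfolding \<psi>_def .
    qed
  qed
  then obtain G where "G \<in> S" "\<forall>c. (\<forall>x\<in>P. 0 \<le> c x) \<longrightarrow> ennreal (\<Sum>x\<in>P. a x * c x) \<le> \<psi> G c" by blast
  then show "\<exists>G\<in>S. prev_le s G" using sdom SD unfolding \<psi>_def by blast
qed



lemma approx_main:
  assumes C: "continuous_dcpo_on (UNIV :: 'a::order set) (\<le>)" and F: "F \<in> hoare_prev"
    and h: "h \<in> LX" and r: "r < F h"
  shows "\<exists>P a b. finite (P::'a set) \<and> (\<forall>x\<in>P. 0 \<le> a x \<and> a x < b x) \<and>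
     (\<forall>c. (\<forall>x\<in>P. 0 \<le> c x) \<longrightarrow> ennreal (\<Sum>x\<in>P. b x * c x) \<le> F (stepf P (\<lambda>x. ennreal (c x)))) \<and>
     r < (\<Sum>x\<in>P. ennreal (a x) * h x)"
proof -
  obtain P0 c0 where P0: "finite (P0::'a set)" and c0: "\<forall>x\<in>P0. 0 \<le> c0 x \<and> ennreal (c0 x) \<le> h x"
    and rc: "r < F (stepf P0 (\<lambda>x. ennreal (c0 x)))"
    using step_approx[OF C F h r] by blast
  define P1 where "P1 = {x\<in>P0. 0 < c0 x}"
  have P1: "finite P1" "P1 \<subseteq> P0" using P0 by (auto simp: P1_def)
  have eq1: "stepf P0 (\<lambda>x. ennreal (c0 x)) = stepf P1 (\<lambda>x. ennreal (c0 x))"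
    by (rule stepf_restrict[OF P1(2)]) (use c0 in \<open>auto simp: P1_def ennreal_eq_0_iff\<close>)
  have rtop: "r \<noteq> top" using rc by auto
  obtain r' where r': "0 \<le> r'" "r = ennreal r'" using rtop by (cases r) auto
  show ?thesis
  proof (cases "\<exists>x\<in>P1. F (stepf {x} (\<lambda>_. 1)) = top")
    case True
    then obtain x where x: "x \<in> P1" "F (stepf {x} (\<lambda>_. 1)) = top" by blast
    have cx: "0 < c0 x" "ennreal (c0 x) \<le> h x" using x c0 P1 by (auto simp: P1_def)
    define a where "a = (\<lambda>_::'a. (r' + 1) / c0 x)"
    define b where "b = (\<lambda>y. a y + 1)"
    have a0: "0 \<le> a y" for y using r' cx by (simp add: a_def)
    have G1: "\<forall>y\<in>{x}. 0 \<le> a y \<and> a y < b y" using a0 by (simp add: b_def)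
    have G2: "\<forall>c. (\<forall>y\<in>{x}. 0 \<le> c y) \<longrightarrow> ennreal (\<Sum>y\<in>{x}. b y * c y) \<le> F (stepf {x} (\<lambda>y. ennreal (c y)))"
    proof (intro allI impI)
      fix c :: "'a \<Rightarrow> real" assume c: "\<forall>y\<in>{x}. 0 \<le> c y"
      show "ennreal (\<Sum>y\<in>{x}. b y * c y) \<le> F (stepf {x} (\<lambda>y. ennreal (c y)))"
      proof (cases "c x = 0")
        case True then show ?thesis by simp
      next
        case False
        then have cpos: "0 < c x" using c by force
        have "F (stepf {x} (\<lambda>y. ennreal (c y))) = ennreal (c x) * F (stepf {x} (\<lambda>_. 1))"
          unfolding stepf_single_scale[of x c] using hp_hom[OF F stepf_LX[OF C]] by simp
        also have "\<dots> = top" using x cpos by simp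
        finally show ?thesis by simp
      qed
    qed
    have G3: "r < (\<Sum>y\<in>{x}. ennreal (a y) * h y)"
    proof -
      have ac: "a x * c0 x = r' + 1" using cx by (simp add: a_def)
      have "r = ennreal r'" by fact
      also have "\<dots> < ennreal (r' + 1)" using r' by (simp add: ennreal_less_iff)
      also have "ennreal (r' + 1) = ennreal (a x) * ennreal (c0 x)"
        using ac a0[of x] cx by (simp add: ennreal_mult[symmetric])
      also have "\<dots> \<le> ennreal (a x) * h x" using cx by (intro mult_left_mono) auto
      finally show "r < (\<Sum>y\<in>{x}. ennreal (a y) * h y)" by simp
    qed
    show ?thesis
      apply (rule exI[of _ "{x}"], rule exI[of _ a], rule exI[of _ b])
      using G1 G2 G3 by simp
  next
    case False
    then have fin1: "\<forall>x\<in>P1. F (stepf {x} (\<lambda>_. 1)) < top" by (auto simp: less_top)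
    have finF: "F (stepf P1 (\<lambda>x. ennreal (c x))) < top" for c :: "'a \<Rightarrow> real"
    proof -
      have "F (stepf P1 (\<lambda>x. ennreal (c x))) \<le> (\<Sum>x\<in>P1. F (stepf {x} (\<lambda>x. ennreal (c x))))"
        by (rule stepf_sum_bound[OF C F P1(1)])
      also have "\<dots> = (\<Sum>x\<in>P1. ennreal (c x) * F (stepf {x} (\<lambda>_. 1)))"
      proof (rule sum.cong[OF refl])
        fix x show "F (stepf {x} (\<lambda>x. ennreal (c x))) = ennreal (c x) * F (stepf {x} (\<lambda>_. 1))"
          unfolding stepf_single_scale[of x c] using hp_hom[OF F stepf_LX[OF C]] by simp
      qed
      also have "\<dots> < top" using P1(1) fin1 by (simp add: ennreal_mult_less_top)
      finally show ?thesis .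
    qed
    define \<Psi> where "\<Psi> c = enn2real (F (stepf P1 (\<lambda>x. ennreal (c x))))" for c :: "'a \<Rightarrow> real"
    have Psi_eq: "ennreal (\<Psi> c) = F (stepf P1 (\<lambda>x. ennreal (c x)))" for c
      using finF[of c] by (simp add: \<Psi>_def)
    have SL: "sublinP P1 \<Psi>"
      unfolding sublinP_def
    proof (intro conjI allI impI)
      fix c c' :: "'a \<Rightarrow> real" assume a: "\<forall>x\<in>P1. c x = c' x"
      have "stepf P1 (\<lambda>x. ennreal (c x)) = stepf P1 (\<lambda>x. ennreal (c' x))"
        by (rule stepf_cong) (use a in auto)
      then show "\<Psi> c = \<Psi> c'" by (simp add: \<Psi>_def)
    next
      fix c c' :: "'a \<Rightarrow> real" assume a: "\<forall>x\<in>P1. 0 \<le> c x \<and> c x \<le> c' x"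
      have "F (stepf P1 (\<lambda>x. ennreal (c x))) \<le> F (stepf P1 (\<lambda>x. ennreal (c' x)))"
      proof (rule hp_mono[OF F stepf_LX[OF C] stepf_LX[OF C]])
        show "stepf P1 (\<lambda>x. ennreal (c x)) \<le> stepf P1 (\<lambda>x. ennreal (c' x))"
          by (rule stepf_mono_c') (use a in \<open>auto intro: ennreal_leI\<close>)
      qed
      then show "\<Psi> c \<le> \<Psi> c'" unfolding \<Psi>_def using finF by (intro enn2real_mono) auto
    next
      fix c c' :: "'a \<Rightarrow> real" assume a: "\<forall>x\<in>P1. 0 \<le> c x \<and> 0 \<le> c' x"
      have "stepf P1 (\<lambda>x. ennreal (c x + c' x)) = stepf P1 (\<lambda>x. ennreal (c x) + ennreal (c' x))"
        by (rule stepf_cong) (use a in auto)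
      also have "\<dots> \<le> (\<lambda>z. stepf P1 (\<lambda>x. ennreal (c x)) z + stepf P1 (\<lambda>x. ennreal (c' x)) z)"
        by (rule le_funI) (rule stepf_add_le)
      finally have le1: "stepf P1 (\<lambda>x. ennreal (c x + c' x)) \<le> (\<lambda>z. stepf P1 (\<lambda>x. ennreal (c x)) z + stepf P1 (\<lambda>x. ennreal (c' x)) z)" .
      have "F (stepf P1 (\<lambda>x. ennreal (c x + c' x))) \<le> F (\<lambda>z. stepf P1 (\<lambda>x. ennreal (c x)) z + stepf P1 (\<lambda>x. ennreal (c' x)) z)"
        by (rule hp_mono[OF F stepf_LX[OF C] LX_add[OF stepf_LX[OF C] stepf_LX[OF C]] le1])
      also have "\<dots> \<le> F (stepf P1 (\<lambda>x. ennreal (c x))) + F (stepf P1 (\<lambda>x. ennreal (c' x)))"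
        by (rule hp_add[OF F stepf_LX[OF C] stepf_LX[OF C]])
      finally have le2: "F (stepf P1 (\<lambda>x. ennreal (c x + c' x))) \<le> F (stepf P1 (\<lambda>x. ennreal (c x))) + F (stepf P1 (\<lambda>x. ennreal (c' x)))" .
      have "\<Psi> (\<lambda>y. c y + c' y) \<le> enn2real (F (stepf P1 (\<lambda>x. ennreal (c x))) + F (stepf P1 (\<lambda>x. ennreal (c' x))))"
        unfolding \<Psi>_def using le2 finF by (intro enn2real_mono) auto
      also have "\<dots> = \<Psi> c + \<Psi> c'" unfolding \<Psi>_def using finF by (intro enn2real_add) auto
      finally show "\<Psi> (\<lambda>y. c y + c' y) \<le> \<Psi> c + \<Psi> c'" .
    next
      fix c :: "'a \<Rightarrow> real" and t :: real assume a: "(\<forall>x\<in>P1. 0 \<le> c x) \<and> 0 \<le> t"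
      have "stepf P1 (\<lambda>x. ennreal (t * c x)) = stepf P1 (\<lambda>x. ennreal t * ennreal (c x))"
        by (rule stepf_cong) (use a in \<open>simp add: ennreal_mult'\<close>)
      also have "\<dots> = (\<lambda>z. ennreal t * stepf P1 (\<lambda>x. ennreal (c x)) z)" by (rule stepf_cmult)
      finally have "F (stepf P1 (\<lambda>x. ennreal (t * c x))) = ennreal t * F (stepf P1 (\<lambda>x. ennreal (c x)))"
        using hp_hom[OF F stepf_LX[OF C]] by simp
      then show "\<Psi> (\<lambda>y. t * c y) = t * \<Psi> c" unfolding \<Psi>_def using a by (simp add: enn2real_mult)
    qed
    have c0P1: "\<forall>x\<in>P1. 0 \<le> c0 x" using c0 P1 by auto
    obtain a' where a'nn: "\<forall>x\<in>P1. 0 \<le> a' x"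
      and a'le: "\<forall>c. (\<forall>x\<in>P1. 0 \<le> c x) \<longrightarrow> (\<Sum>x\<in>P1. a' x * c x) \<le> \<Psi> c"
      and a'eq: "(\<Sum>x\<in>P1. a' x * c0 x) = \<Psi> c0"
      using HB[OF P1(1) SL c0P1] by blast
    define V where "V = \<Psi> c0"
    have "ennreal r' < ennreal V" using rc r' Psi_eq[of c0] eq1 by (simp add: V_def)
    then have rV: "r' < V" using r' by (simp add: ennreal_less_iff)
    have V0: "0 < V" using rV r' by simp
    define \<theta> where "\<theta> = (r' + V) / (2 * V)"
    have \<theta>: "0 \<le> \<theta>" "\<theta> < 1" "r' < \<theta> * V" using V0 rV r' by (auto simp: \<theta>_def field_simps)
    define P2 where "P2 = {x\<in>P1. 0 < a' x}"
    have P2: "finite P2" "P2 \<subseteq> P1" using P1 by (auto simp: P2_def)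
    define a where "a x = \<theta> * a' x" for x
    have ann: "0 \<le> a x" if "x \<in> P2" for x using that a'nn \<theta> P2 by (auto simp: a_def)
    have H1: "\<forall>x\<in>P2. 0 \<le> a x \<and> a x < a' x"
    proof
      fix x assume x: "x \<in> P2"
      then have "0 < a' x" by (simp add: P2_def)
      then have "\<theta> * a' x < 1 * a' x" using \<theta> by (intro mult_strict_right_mono) auto
      then show "0 \<le> a x \<and> a x < a' x" using ann[OF x] by (simp add: a_def)
    qed
    have H2: "\<forall>c. (\<forall>x\<in>P2. 0 \<le> c x) \<longrightarrow> ennreal (\<Sum>x\<in>P2. a' x * c x) \<le> F (stepf P2 (\<lambda>x. ennreal (c x)))"
    proof (intro allI impI)
      fix c :: "'a \<Rightarrow> real" assume c: "\<forall>x\<in>P2. 0 \<le> c x"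
      define c'' where "c'' y = (if y \<in> P2 then c y else 0)" for y
      have c''nn: "\<forall>x\<in>P1. 0 \<le> c'' x" using c by (simp add: c''_def)
      have s1: "(\<Sum>x\<in>P2. a' x * c x) = (\<Sum>x\<in>P1. a' x * c'' x)"
      proof -
        have "(\<Sum>x\<in>P1. a' x * c'' x) = (\<Sum>x\<in>P2. a' x * c'' x)"
          using P1(1) P2(2) by (intro sum.mono_neutral_right) (auto simp: c''_def)
        also have "\<dots> = (\<Sum>x\<in>P2. a' x * c x)" by (intro sum.cong) (auto simp: c''_def)
        finally show ?thesis by simp
      qed
      have s2: "stepf P1 (\<lambda>x. ennreal (c'' x)) = stepf P2 (\<lambda>x. ennreal (c x))"
      proof -
        have "stepf P1 (\<lambda>x. ennreal (c'' x)) = stepf P2 (\<lambda>x. ennreal (c'' x))"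
          by (rule stepf_restrict[OF P2(2)]) (simp add: c''_def)
        also have "\<dots> = stepf P2 (\<lambda>x. ennreal (c x))" by (rule stepf_cong) (simp add: c''_def)
        finally show ?thesis .
      qed
      have "(\<Sum>x\<in>P2. a' x * c x) \<le> \<Psi> c''" using s1 a'le c''nn by simp
      then have "ennreal (\<Sum>x\<in>P2. a' x * c x) \<le> ennreal (\<Psi> c'')" by (rule ennreal_leI)
      also have "\<dots> = F (stepf P2 (\<lambda>x. ennreal (c x)))" using Psi_eq[of c''] s2 by simp
      finally show "ennreal (\<Sum>x\<in>P2. a' x * c x) \<le> F (stepf P2 (\<lambda>x. ennreal (c x)))" .
    qed
    have H3: "r < (\<Sum>x\<in>P2. ennreal (a x) * h x)"
    proof -
      have "(\<Sum>x\<in>P2. a' x * c0 x) = (\<Sum>x\<in>P1. a' x * c0 x)"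
        using P1(1) P2(2) a'nn by (intro sum.mono_neutral_left) (auto simp: P2_def)
      then have sumV: "(\<Sum>x\<in>P2. a x * c0 x) = \<theta> * V"
        using a'eq by (simp add: a_def V_def sum_distrib_left[symmetric] mult.assoc)
      have nn: "0 \<le> a x * c0 x" if "x \<in> P2" for x using ann[OF that] c0P1 P2 that by auto
      have "r = ennreal r'" by fact
      also have "\<dots> < ennreal (\<theta> * V)" using \<theta> r' by (simp add: ennreal_less_iff)
      also have "ennreal (\<theta> * V) = (\<Sum>x\<in>P2. ennreal (a x * c0 x))"
        using sumV nn by (simp add: sum_ennreal)
      also have "\<dots> = (\<Sum>x\<in>P2. ennreal (a x) * ennreal (c0 x))"
        using ann by (intro sum.cong) (auto simp: ennreal_mult')
      also have "\<dots> \<le> (\<Sum>x\<in>P2. ennreal (a x) * h x)"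
        using c0 P2 P1 by (intro sum_mono mult_left_mono) auto
      finally show "r < (\<Sum>x\<in>P2. ennreal (a x) * h x)" .
    qed
    show ?thesis
      apply (rule exI[of _ P2], rule exI[of _ a], rule exI[of _ a'])
      using P2(1) H1 H2 H3 by simp
  qed
qed



definition row_of :: "'a set \<Rightarrow> ('a \<Rightarrow> real) \<Rightarrow> (ennreal \<times> 'a) list" where
  "row_of P a = map (\<lambda>x. (ennreal (a x), x)) (SOME xs. set xs = P \<and> distinct xs)"

lemma lin_map: "lin (map (\<lambda>x. (f x, x)) xs) h = sum_list (map (\<lambda>x. f x * h x) xs)"
  by (induction xs) (simp_all add: lin_Nil lin_Cons)

lemma rsum_map: "rsum (map (\<lambda>x. (f x, x)) xs) = sum_list (map f xs)"
  by (induction xs) (simp_all add: rsum_Nil rsum_Cons)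

lemma row_of:
  assumes "finite P"
  shows "lin (row_of P a) h = (\<Sum>x\<in>P. ennreal (a x) * h x)" "rsum (row_of P a) = (\<Sum>x\<in>P. ennreal (a x))"
proof -
  let ?xs = "SOME xs. set xs = P \<and> distinct xs"
  have "\<exists>xs. set xs = P \<and> distinct xs" using finite_distinct_list[OF assms] .
  then have xs: "set ?xs = P \<and> distinct ?xs" by (rule someI_ex)
  show "lin (row_of P a) h = (\<Sum>x\<in>P. ennreal (a x) * h x)"
    unfolding row_of_def lin_map using xs by (metis sum_list_distinct_conv_sum_set)
  show "rsum (row_of P a) = (\<Sum>x\<in>P. ennreal (a x))"
    unfolding row_of_def rsum_map using xs by (metis sum_list_distinct_conv_sum_set)
qed

lemma row_of_fin: "\<forall>(c, x)\<in>set (row_of P a). c \<noteq> \<infinity>"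
  unfolding row_of_def by auto

lemma sh_single: "simple_hoare [row] h = (if h \<in> LX then lin row h else 0)"
  by (simp add: simple_hoare_eq)

lemma approx_hp:
  assumes C: "continuous_dcpo_on (UNIV :: 'a::order set) (\<le>)" and F: "F \<in> hoare_prev"
    and h: "h \<in> LX" and r: "r < F h"
  shows "\<exists>s\<in>(simple_basis :: (('a \<Rightarrow> ennreal) \<Rightarrow> ennreal) set). way_below_on hoare_prev prev_le s F \<and> r < s h"
proof -
  obtain P a b where PAB: "finite (P::'a set) \<and> (\<forall>x\<in>P. 0 \<le> a x \<and> a x < b x)
    \<and> (\<forall>c. (\<forall>x\<in>P. 0 \<le> c x) \<longrightarrow> ennreal (\<Sum>x\<in>P. b x * c x) \<le> F (stepf P (\<lambda>x. ennreal (c x))))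
    \<and> r < (\<Sum>x\<in>P. ennreal (a x) * h x)"
    using approx_main[OF C F h r] by (elim exE) (erule that)
  have P: "finite P" using PAB[THEN conjunct1] .
  have ab: "\<forall>x\<in>P. 0 \<le> a x \<and> a x < b x" using PAB[THEN conjunct2, THEN conjunct1] .
  have bdom: "\<forall>c. (\<forall>x\<in>P. 0 \<le> c x) \<longrightarrow> ennreal (\<Sum>x\<in>P. b x * c x) \<le> F (stepf P (\<lambda>x. ennreal (c x)))"
    using PAB[THEN conjunct2, THEN conjunct2, THEN conjunct1] .
  have ra: "r < (\<Sum>x\<in>P. ennreal (a x) * h x)" using PAB[THEN conjunct2, THEN conjunct2, THEN conjunct2] .
  define s where "s = simple_hoare [row_of P a]"
  have sB: "s \<in> simple_basis" unfolding simple_basis_def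
  proof (intro CollectI exI[of _ "[row_of P a]"] conjI)
    show "s = simple_hoare [row_of P a]" by (simp add: s_def)
    show "finite_coeffs [row_of P a]" using row_of_fin[of P a] by (simp add: finite_coeffs_def)
  qed
  have sD: "s \<in> hoare_prev" unfolding s_def by (rule sh_hp) simp
  have an: "\<forall>x\<in>P. 0 \<le> a x" using ab by auto
  have wb: "way_below_on hoare_prev prev_le s F"
  proof (rule wb_crit[OF C closed_hp F sD P ab bdom])
    show "\<forall>G\<in>hoare_prev. (\<forall>c. (\<forall>x\<in>P. 0 \<le> c x) \<longrightarrow> ennreal (\<Sum>x\<in>P. a x * c x) \<le> G (stepf P (\<lambda>x. ennreal (c x)))) \<longrightarrow> prev_le s G"
      unfolding prev_le_def s_def sh_single row_of[OF P] using LIN[OF C _ P an] by auto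
  qed
  have "r < s h" using ra h unfolding s_def sh_single row_of[OF P] by simp
  then show ?thesis using sB wb by blast
qed

lemma approx_sub:
  assumes C: "continuous_dcpo_on (UNIV :: 'a::order set) (\<le>)" and F: "F \<in> hoare_prev_sub"
    and h: "h \<in> LX" and r: "r < F h"
  shows "\<exists>s\<in>(simple_basis_sub :: (('a \<Rightarrow> ennreal) \<Rightarrow> ennreal) set). way_below_on hoare_prev_sub prev_le s F \<and> r < s h"
proof -
  have Fh: "F \<in> hoare_prev" using subD[OF F] .
  obtain P a b where PAB: "finite (P::'a set) \<and> (\<forall>x\<in>P. 0 \<le> a x \<and> a x < b x)
    \<and> (\<forall>c. (\<forall>x\<in>P. 0 \<le> c x) \<longrightarrow> ennreal (\<Sum>x\<in>P. b x * c x) \<le> F (stepf P (\<lambda>x. ennreal (c x))))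
    \<and> r < (\<Sum>x\<in>P. ennreal (a x) * h x)"
    using approx_main[OF C Fh h r] by (elim exE) (erule that)
  have P: "finite P" using PAB[THEN conjunct1] .
  have ab: "\<forall>x\<in>P. 0 \<le> a x \<and> a x < b x" using PAB[THEN conjunct2, THEN conjunct1] .
  have bdom: "\<forall>c. (\<forall>x\<in>P. 0 \<le> c x) \<longrightarrow> ennreal (\<Sum>x\<in>P. b x * c x) \<le> F (stepf P (\<lambda>x. ennreal (c x)))"
    using PAB[THEN conjunct2, THEN conjunct2, THEN conjunct1] .
  have ra: "r < (\<Sum>x\<in>P. ennreal (a x) * h x)" using PAB[THEN conjunct2, THEN conjunct2, THEN conjunct2] .
  have an: "\<forall>x\<in>P. 0 \<le> a x" using ab by auto
  have "ennreal (\<Sum>x\<in>P. b x * 1) \<le> F (stepf P (\<lambda>x. ennreal 1))" using bdom[rule_format, of "\<lambda>_. 1"] by simp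
  also have "\<dots> \<le> F (\<lambda>_. 1)"
    by (intro hp_mono[OF Fh] stepf_LX[OF C] LX_const stepf_le) simp_all
  also have "\<dots> \<le> 1" using subD1[OF F LX_const[of 0]] hp_zero[OF Fh] by simp
  finally have sb: "(\<Sum>x\<in>P. b x) \<le> 1" by simp
  have "(\<Sum>x\<in>P. a x) \<le> (\<Sum>x\<in>P. b x)" using ab by (intro sum_mono) (simp add: less_imp_le)
  with sb have sa: "(\<Sum>x\<in>P. a x) \<le> 1" by simp
  define s where "s = simple_hoare [row_of P a]"
  have rs: "rsum (row_of P a) \<le> 1" unfolding row_of[OF P] using an sa by (simp add: sum_ennreal)
  have sB: "s \<in> simple_basis_sub" unfolding simple_basis_sub_def
  proof (intro CollectI exI[of _ "[row_of P a]"] conjI)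
    show "s = simple_hoare [row_of P a]" by (simp add: s_def)
    show "finite_coeffs [row_of P a]" using row_of_fin[of P a] by (simp add: finite_coeffs_def)
    show "\<forall>row\<in>set [row_of P a]. (\<Sum>(a, x)\<leftarrow>row. a) \<le> 1" using rs by (simp add: rsum_def)
  qed
  have sD: "s \<in> hoare_prev_sub" unfolding s_def using rs by (intro sh_sub) auto
  have wb: "way_below_on hoare_prev_sub prev_le s F"
  proof (rule wb_crit[OF C closed_sub F sD P ab bdom])
    show "\<forall>G\<in>hoare_prev_sub. (\<forall>c. (\<forall>x\<in>P. 0 \<le> c x) \<longrightarrow> ennreal (\<Sum>x\<in>P. a x * c x) \<le> G (stepf P (\<lambda>x. ennreal (c x)))) \<longrightarrow> prev_le s G"
      unfolding prev_le_def s_def sh_single row_of[OF P] using LIN[OF C subD P an] by auto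
  qed
  have "r < s h" using ra h unfolding s_def sh_single row_of[OF P] by simp
  then show ?thesis using sB wb by blast
qed

lemma approx_norm:
  assumes C: "continuous_dcpo_on (UNIV :: 'a::order set) (\<le>)" and F: "F \<in> hoare_prev_norm"
    and bt: "\<forall>x. b0 \<le> (x::'a)"
    and h: "h \<in> LX" and r: "r < F h"
  shows "\<exists>s\<in>(simple_basis_norm :: (('a \<Rightarrow> ennreal) \<Rightarrow> ennreal) set). way_below_on hoare_prev_norm prev_le s F \<and> r < s h"
proof -
  have Fh: "F \<in> hoare_prev" using normD[OF F] .
  obtain P a b where PAB: "finite (P::'a set) \<and> (\<forall>x\<in>P. 0 \<le> a x \<and> a x < b x)
    \<and> (\<forall>c. (\<forall>x\<in>P. 0 \<le> c x) \<longrightarrow> ennreal (\<Sum>x\<in>P. b x * c x) \<le> F (stepf P (\<lambda>x. ennreal (c x))))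
    \<and> r < (\<Sum>x\<in>P. ennreal (a x) * h x)"
    using approx_main[OF C Fh h r] by (elim exE) (erule that)
  have P: "finite P" using PAB[THEN conjunct1] .
  have ab: "\<forall>x\<in>P. 0 \<le> a x \<and> a x < b x" using PAB[THEN conjunct2, THEN conjunct1] .
  have bdom: "\<forall>c. (\<forall>x\<in>P. 0 \<le> c x) \<longrightarrow> ennreal (\<Sum>x\<in>P. b x * c x) \<le> F (stepf P (\<lambda>x. ennreal (c x)))"
    using PAB[THEN conjunct2, THEN conjunct2, THEN conjunct1] .
  have ra: "r < (\<Sum>x\<in>P. ennreal (a x) * h x)" using PAB[THEN conjunct2, THEN conjunct2, THEN conjunct2] .
  have an: "\<forall>x\<in>P. 0 \<le> a x" using ab by auto
  have "ennreal (\<Sum>x\<in>P. b x * 1) \<le> F (stepf P (\<lambda>x. ennreal 1))" using bdom[rule_format, of "\<lambda>_. 1"] by simp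
  also have "\<dots> \<le> F (\<lambda>_. ennreal 1)"
    by (intro hp_mono[OF Fh] stepf_LX[OF C] LX_const stepf_le) simp_all
  also have "\<dots> = 1" using norm_const[OF F, of 1] by simp
  finally have sb: "(\<Sum>x\<in>P. b x) \<le> 1" by simp
  have "(\<Sum>x\<in>P. a x) \<le> (\<Sum>x\<in>P. b x)" using ab by (intro sum_mono) (simp add: less_imp_le)
  with sb have sa: "(\<Sum>x\<in>P. a x) \<le> 1" by simp
  define row where "row = (ennreal (1 - (\<Sum>x\<in>P. a x)), b0) # row_of P a"
  define s where "s = simple_hoare [row]"
  have rs: "rsum row = 1"
  proof -
    have "rsum row = ennreal (1 - (\<Sum>x\<in>P. a x)) + ennreal (\<Sum>x\<in>P. a x)"
      unfolding row_def rsum_Cons row_of[OF P] using an by (simp add: sum_ennreal)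
    also have "\<dots> = ennreal (1 - (\<Sum>x\<in>P. a x) + (\<Sum>x\<in>P. a x))"
      using sa an by (subst ennreal_plus) (auto intro: sum_nonneg)
    finally show ?thesis by simp
  qed
  have linr: "lin row h' = ennreal (1 - (\<Sum>x\<in>P. a x)) * h' b0 + (\<Sum>x\<in>P. ennreal (a x) * h' x)" for h'
    unfolding row_def lin_Cons row_of[OF P] ..
  have sB: "s \<in> simple_basis_norm" unfolding simple_basis_norm_def
  proof (intro CollectI exI[of _ "[row]"] conjI)
    show "s = simple_hoare [row]" by (simp add: s_def)
    show "finite_coeffs [row]" using row_of_fin[of P a] by (simp add: finite_coeffs_def row_def)
    show "\<forall>row\<in>set [row]. (\<Sum>(a, x)\<leftarrow>row. a) = 1" using rs by (simp add: rsum_def)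
  qed
  have sD: "s \<in> hoare_prev_norm" unfolding s_def using rs by (intro sh_norm) auto
  have wb: "way_below_on hoare_prev_norm prev_le s F"
  proof (rule wb_crit[OF C closed_norm F sD P ab bdom])
    show "\<forall>G\<in>hoare_prev_norm. (\<forall>c. (\<forall>x\<in>P. 0 \<le> c x) \<longrightarrow> ennreal (\<Sum>x\<in>P. a x * c x) \<le> G (stepf P (\<lambda>x. ennreal (c x)))) \<longrightarrow> prev_le s G"
      unfolding prev_le_def s_def sh_single linr using normlin[OF C _ P an sa bt] by auto
  qed
  have "r < s h"
  proof -
    have "r < (\<Sum>x\<in>P. ennreal (a x) * h x)" by (rule ra)
    also have "\<dots> \<le> s h" unfolding s_def sh_single linr using h by simp
    finally show ?thesis .
  qed
  then show ?thesis using sB wb by blast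
qed

lemma basis_gen:
  fixes D :: "(('a::order \<Rightarrow> ennreal) \<Rightarrow> ennreal) set"
  assumes D: "closedD D" and BD: "B \<subseteq> D"
    and zero: "\<forall>F\<in>D. \<exists>z\<in>B. way_below_on D prev_le z F"
    and join: "\<forall>s1\<in>B. \<forall>s2\<in>B. \<exists>s3\<in>B. \<forall>h\<in>LX. s3 h = max (s1 h) (s2 h)"
    and approx: "\<forall>F\<in>D. \<forall>h\<in>LX. \<forall>r. r < F h \<longrightarrow> (\<exists>s\<in>B. way_below_on D prev_le s F \<and> r < s h)"
  shows "basis_on D prev_le B"
  unfolding basis_on_def
proof (intro conjI ballI)
  show "B \<subseteq> D" by fact
  have po: "partial_order_on_rel D prev_le" using D po_prev unfolding closedD_def by blast
  fix F assume F: "F \<in> D"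
  let ?BF = "{b\<in>B. way_below_on D prev_le b F}"
  show "directed_on D prev_le ?BF"
    unfolding directed_on_def
  proof (intro conjI ballI)
    show "?BF \<subseteq> D" using BD by auto
    show "?BF \<noteq> {}" using zero F by blast
    fix s1 s2 assume s1: "s1 \<in> ?BF" and s2: "s2 \<in> ?BF"
    then obtain s3 where s3: "s3 \<in> B" "\<forall>h\<in>LX. s3 h = max (s1 h) (s2 h)" using join by blast
    have le1: "prev_le s1 s3" "prev_le s2 s3" using s3 unfolding prev_le_def by auto
    have "way_below_on D prev_le s3 F"
      unfolding way_below_on_def
    proof (intro conjI allI impI)
      show "s3 \<in> D" using s3 BD by auto
      show "F \<in> D" by fact
      fix S u assume a: "directed_on D prev_le S \<and> is_lub_on D prev_le S u \<and> prev_le F u"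
      obtain t1 where t1: "t1 \<in> S" "prev_le s1 t1" using s1 a unfolding way_below_on_def by blast
      obtain t2 where t2: "t2 \<in> S" "prev_le s2 t2" using s2 a unfolding way_below_on_def by blast
      obtain t3 where t3: "t3 \<in> S" "prev_le t1 t3" "prev_le t2 t3"
        using a t1 t2 unfolding directed_on_def by blast
      have "prev_le s3 t3" unfolding prev_le_def
      proof
        fix h :: "'a \<Rightarrow> ennreal" assume h: "h \<in> LX"
        have "s1 h \<le> t3 h" using t1 t3 h unfolding prev_le_def by (meson order_trans)
        moreover have "s2 h \<le> t3 h" using t2 t3 h unfolding prev_le_def by (meson order_trans)
        ultimately show "s3 h \<le> t3 h" using s3 h by simp
      qed
      then show "\<exists>t\<in>S. prev_le s3 t" using t3 by blast
    qed
    then show "\<exists>z\<in>?BF. prev_le s1 z \<and> prev_le s2 z" using s3 le1 by blast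
  qed
  show "is_lub_on D prev_le ?BF F"
    unfolding is_lub_on_def
  proof (intro conjI ballI impI)
    show "F \<in> D" by fact
    show "prev_le s F" if "s \<in> ?BF" for s using wb_le[OF po] that by blast
    fix v assume v: "v \<in> D" "\<forall>s\<in>?BF. prev_le s v"
    show "prev_le F v"
      unfolding prev_le_def
    proof
      fix h :: "'a \<Rightarrow> ennreal" assume h: "h \<in> LX"
      show "F h \<le> v h"
      proof (rule dense_le)
        fix y assume "y < F h"
        then obtain s where "s \<in> B" "way_below_on D prev_le s F" "y < s h" using approx F h by blast
        moreover then have "s h \<le> v h" using v h unfolding prev_le_def by blast
        ultimately show "y \<le> v h" by simp
      qed
    qed
  qed
qed

lemma sh_append:
  assumes "rows1 \<noteq> []" "rows2 \<noteq> []" "h \<in> LX"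
  shows "simple_hoare (rows1 @ rows2) h = max (simple_hoare rows1 h) (simple_hoare rows2 h)"
  using assms by (simp add: simple_hoare_eq image_Un Max_Un)

lemma sh_nil: "simple_hoare [[]] h = 0"
  by (simp add: simple_hoare_eq lin_Nil)

lemma wb_least:
  assumes "z \<in> D" "F \<in> D" "\<forall>G\<in>D. prev_le z G"
  shows "way_below_on D prev_le z F"
  using assms unfolding way_below_on_def directed_on_def by blast



lemma sb_sub_hp: "simple_basis \<subseteq> (hoare_prev :: (('a::order \<Rightarrow> ennreal) \<Rightarrow> ennreal) set)"
  unfolding simple_basis_def finite_coeffs_def using sh_hp by blast

lemma sbs_sub: "simple_basis_sub \<subseteq> (hoare_prev_sub :: (('a::order \<Rightarrow> ennreal) \<Rightarrow> ennreal) set)"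
  unfolding simple_basis_sub_def finite_coeffs_def using sh_sub unfolding rsum_def by blast

lemma sbn_sub: "simple_basis_norm \<subseteq> (hoare_prev_norm :: (('a::order \<Rightarrow> ennreal) \<Rightarrow> ennreal) set)"
  unfolding simple_basis_norm_def finite_coeffs_def using sh_norm unfolding rsum_def by blast

lemma fc_append: "finite_coeffs r1 \<Longrightarrow> finite_coeffs r2 \<Longrightarrow> finite_coeffs (r1 @ r2)"
  unfolding finite_coeffs_def by auto

lemma sb_join:
  assumes "s1 \<in> (simple_basis :: (('a::order \<Rightarrow> ennreal) \<Rightarrow> ennreal) set)" "s2 \<in> simple_basis"
  shows "\<exists>s3\<in>simple_basis. \<forall>h\<in>LX. s3 h = max (s1 h) (s2 h)"
proof -
  obtain r1 r2 where r: "s1 = simple_hoare r1" "finite_coeffs r1" "s2 = simple_hoare r2" "finite_coeffs r2"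
    using assms unfolding simple_basis_def by blast
  have "simple_hoare (r1 @ r2) \<in> simple_basis" unfolding simple_basis_def using fc_append[OF r(2,4)] by blast
  moreover have "\<forall>h\<in>LX. simple_hoare (r1 @ r2) h = max (s1 h) (s2 h)"
    using r sh_append unfolding finite_coeffs_def by blast
  ultimately show ?thesis by blast
qed

lemma sbs_join:
  assumes "s1 \<in> (simple_basis_sub :: (('a::order \<Rightarrow> ennreal) \<Rightarrow> ennreal) set)" "s2 \<in> simple_basis_sub"
  shows "\<exists>s3\<in>simple_basis_sub. \<forall>h\<in>LX. s3 h = max (s1 h) (s2 h)"
proof -
  obtain r1 r2 where r: "s1 = simple_hoare r1" "finite_coeffs r1" "s2 = simple_hoare r2" "finite_coeffs r2"
    "\<forall>row\<in>set r1. (\<Sum>(a, x)\<leftarrow>row. a) \<le> 1" "\<forall>row\<in>set r2. (\<Sum>(a, x)\<leftarrow>row. a) \<le> 1"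
    using assms unfolding simple_basis_sub_def by blast
  have "simple_hoare (r1 @ r2) \<in> simple_basis_sub" unfolding simple_basis_sub_def
    using fc_append[OF r(2,4)] r(5,6) by (intro CollectI exI[of _ "r1 @ r2"] conjI refl) auto
  moreover have "\<forall>h\<in>LX. simple_hoare (r1 @ r2) h = max (s1 h) (s2 h)"
    using r sh_append unfolding finite_coeffs_def by blast
  ultimately show ?thesis by blast
qed

lemma sbn_join:
  assumes "s1 \<in> (simple_basis_norm :: (('a::order \<Rightarrow> ennreal) \<Rightarrow> ennreal) set)" "s2 \<in> simple_basis_norm"
  shows "\<exists>s3\<in>simple_basis_norm. \<forall>h\<in>LX. s3 h = max (s1 h) (s2 h)"
proof -
  obtain r1 r2 where r: "s1 = simple_hoare r1" "finite_coeffs r1" "s2 = simple_hoare r2" "finite_coeffs r2"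
    "\<forall>row\<in>set r1. (\<Sum>(a, x)\<leftarrow>row. a) = 1" "\<forall>row\<in>set r2. (\<Sum>(a, x)\<leftarrow>row. a) = 1"
    using assms unfolding simple_basis_norm_def by blast
  have "simple_hoare (r1 @ r2) \<in> simple_basis_norm" unfolding simple_basis_norm_def
    using fc_append[OF r(2,4)] r(5,6) by (intro CollectI exI[of _ "r1 @ r2"] conjI refl) auto
  moreover have "\<forall>h\<in>LX. simple_hoare (r1 @ r2) h = max (s1 h) (s2 h)"
    using r sh_append unfolding finite_coeffs_def by blast
  ultimately show ?thesis by blast
qed

lemma z0_basis: "simple_hoare [[]] \<in> (simple_basis :: (('a::order \<Rightarrow> ennreal) \<Rightarrow> ennreal) set)"
  unfolding simple_basis_def finite_coeffs_def by auto

lemma z0_basis_sub: "simple_hoare [[]] \<in> (simple_basis_sub :: (('a::order \<Rightarrow> ennreal) \<Rightarrow> ennreal) set)"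
  unfolding simple_basis_sub_def finite_coeffs_def by auto

lemma zb_basis: "simple_hoare [[(1, b0)]] \<in> (simple_basis_norm :: (('a::order \<Rightarrow> ennreal) \<Rightarrow> ennreal) set)"
  unfolding simple_basis_norm_def finite_coeffs_def by auto

lemma zb_eq: "simple_hoare [[(1, b0)]] = (\<lambda>h. if h \<in> LX then h b0 else 0)"
  by (rule ext) (simp add: simple_hoare_eq lin_Cons lin_Nil)

theorem proposition3p39:
  assumes "continuous_dcpo_on (UNIV :: 'a::order set) (\<le>)"
  shows "continuous_dcpo_on (hoare_prev :: (('a \<Rightarrow> ennreal) \<Rightarrow> ennreal) set) prev_le
       \<and> basis_on (hoare_prev :: (('a \<Rightarrow> ennreal) \<Rightarrow> ennreal) set) prev_le simple_basis
       \<and> continuous_dcpo_on (hoare_prev_sub :: (('a \<Rightarrow> ennreal) \<Rightarrow> ennreal) set) prev_le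
       \<and> basis_on (hoare_prev_sub :: (('a \<Rightarrow> ennreal) \<Rightarrow> ennreal) set) prev_le simple_basis_sub
       \<and> (\<forall>bot :: 'a. (\<forall>x. bot \<le> x) \<longrightarrow>
            continuous_dcpo_on (hoare_prev_norm :: (('a \<Rightarrow> ennreal) \<Rightarrow> ennreal) set) prev_le
          \<and> basis_on (hoare_prev_norm :: (('a \<Rightarrow> ennreal) \<Rightarrow> ennreal) set) prev_le simple_basis_norm
          \<and> (\<lambda>h. if h \<in> LX then h bot else 0) \<in> (hoare_prev_norm :: (('a \<Rightarrow> ennreal) \<Rightarrow> ennreal) set)
          \<and> (\<forall>F \<in> (hoare_prev_norm :: (('a \<Rightarrow> ennreal) \<Rightarrow> ennreal) set).
                prev_le (\<lambda>h. if h \<in> LX then h bot else 0) F))"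
proof -
  note C = assms
  have Bhp: "basis_on (hoare_prev :: (('a \<Rightarrow> ennreal) \<Rightarrow> ennreal) set) prev_le simple_basis"
  proof (rule basis_gen[OF closed_hp sb_sub_hp])
    show "\<forall>F\<in>hoare_prev. \<exists>z\<in>simple_basis. way_below_on hoare_prev prev_le z (F :: ('a \<Rightarrow> ennreal) \<Rightarrow> ennreal)"
    proof
      fix F :: "('a \<Rightarrow> ennreal) \<Rightarrow> ennreal" assume F: "F \<in> hoare_prev"
      have "way_below_on hoare_prev prev_le (simple_hoare [[]]) F"
        using F by (intro wb_least sh_hp) (auto simp: prev_le_def sh_nil)
      then show "\<exists>z\<in>simple_basis. way_below_on hoare_prev prev_le z F" using z0_basis by blast
    qed
    show "\<forall>s1\<in>simple_basis. \<forall>s2\<in>simple_basis. \<exists>s3\<in>simple_basis. \<forall>h\<in>LX. s3 h = max (s1 h) (s2 h)"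
      using sb_join by blast
    show "\<forall>F\<in>(hoare_prev :: (('a \<Rightarrow> ennreal) \<Rightarrow> ennreal) set). \<forall>h\<in>LX. \<forall>r. r < F h \<longrightarrow> (\<exists>s\<in>simple_basis. way_below_on hoare_prev prev_le s F \<and> r < s h)"
      using approx_hp[OF C] by auto
  qed
  have Bsub: "basis_on (hoare_prev_sub :: (('a \<Rightarrow> ennreal) \<Rightarrow> ennreal) set) prev_le simple_basis_sub"
  proof (rule basis_gen[OF closed_sub sbs_sub])
    show "\<forall>F\<in>hoare_prev_sub. \<exists>z\<in>simple_basis_sub. way_below_on hoare_prev_sub prev_le z (F :: ('a \<Rightarrow> ennreal) \<Rightarrow> ennreal)"
    proof
      fix F :: "('a \<Rightarrow> ennreal) \<Rightarrow> ennreal" assume F: "F \<in> hoare_prev_sub"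
      have "simple_hoare [[]] \<in> (hoare_prev_sub :: (('a \<Rightarrow> ennreal) \<Rightarrow> ennreal) set)"
        using sbs_sub z0_basis_sub by blast
      then have "way_below_on hoare_prev_sub prev_le (simple_hoare [[]]) F"
        using F by (intro wb_least) (auto simp: prev_le_def sh_nil)
      then show "\<exists>z\<in>simple_basis_sub. way_below_on hoare_prev_sub prev_le z F" using z0_basis_sub by blast
    qed
    show "\<forall>s1\<in>simple_basis_sub. \<forall>s2\<in>simple_basis_sub. \<exists>s3\<in>simple_basis_sub. \<forall>h\<in>LX. s3 h = max (s1 h) (s2 h)"
      using sbs_join by blast
    show "\<forall>F\<in>(hoare_prev_sub :: (('a \<Rightarrow> ennreal) \<Rightarrow> ennreal) set). \<forall>h\<in>LX. \<forall>r. r < F h \<longrightarrow> (\<exists>s\<in>simple_basis_sub. way_below_on hoare_prev_sub prev_le s F \<and> r < s h)"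
      using approx_sub[OF C] by auto
  qed
  have Chp: "continuous_dcpo_on (hoare_prev :: (('a \<Rightarrow> ennreal) \<Rightarrow> ennreal) set) prev_le"
    unfolding continuous_dcpo_on_def
    using dcpo_closed[OF closed_hp] basis_imp_self[OF po_prev[OF order_refl] Bhp] by blast
  have Csub: "continuous_dcpo_on (hoare_prev_sub :: (('a \<Rightarrow> ennreal) \<Rightarrow> ennreal) set) prev_le"
    unfolding continuous_dcpo_on_def
    using dcpo_closed[OF closed_sub] basis_imp_self[OF po_prev Bsub] closed_sub unfolding closedD_def by blast
  have Norm: "\<forall>bot :: 'a. (\<forall>x. bot \<le> x) \<longrightarrow>
            continuous_dcpo_on (hoare_prev_norm :: (('a \<Rightarrow> ennreal) \<Rightarrow> ennreal) set) prev_le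
          \<and> basis_on (hoare_prev_norm :: (('a \<Rightarrow> ennreal) \<Rightarrow> ennreal) set) prev_le simple_basis_norm
          \<and> (\<lambda>h. if h \<in> LX then h bot else 0) \<in> (hoare_prev_norm :: (('a \<Rightarrow> ennreal) \<Rightarrow> ennreal) set)
          \<and> (\<forall>F \<in> (hoare_prev_norm :: (('a \<Rightarrow> ennreal) \<Rightarrow> ennreal) set).
                prev_le (\<lambda>h. if h \<in> LX then h bot else 0) F)"
  proof (intro allI impI)
    fix b0 :: 'a assume bt: "\<forall>x. b0 \<le> x"
    have zin: "simple_hoare [[(1, b0)]] \<in> (hoare_prev_norm :: (('a \<Rightarrow> ennreal) \<Rightarrow> ennreal) set)"
      using sbn_sub zb_basis by blast
    have zle: "\<forall>F\<in>(hoare_prev_norm :: (('a \<Rightarrow> ennreal) \<Rightarrow> ennreal) set). prev_le (simple_hoare [[(1, b0)]]) F"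
      unfolding zb_eq prev_le_def using norm_least[OF _ bt] by auto
    have Bn: "basis_on (hoare_prev_norm :: (('a \<Rightarrow> ennreal) \<Rightarrow> ennreal) set) prev_le simple_basis_norm"
    proof (rule basis_gen[OF closed_norm sbn_sub])
      show "\<forall>F\<in>hoare_prev_norm. \<exists>z\<in>simple_basis_norm. way_below_on hoare_prev_norm prev_le z (F :: ('a \<Rightarrow> ennreal) \<Rightarrow> ennreal)"
      proof
        fix F :: "('a \<Rightarrow> ennreal) \<Rightarrow> ennreal" assume F: "F \<in> hoare_prev_norm"
        have "way_below_on hoare_prev_norm prev_le (simple_hoare [[(1, b0)]]) F"
          using F zin zle by (intro wb_least) auto
        then show "\<exists>z\<in>simple_basis_norm. way_below_on hoare_prev_norm prev_le z F" using zb_basis by blast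
      qed
      show "\<forall>s1\<in>simple_basis_norm. \<forall>s2\<in>simple_basis_norm. \<exists>s3\<in>simple_basis_norm. \<forall>h\<in>LX. s3 h = max (s1 h) (s2 h)"
        using sbn_join by blast
      show "\<forall>F\<in>(hoare_prev_norm :: (('a \<Rightarrow> ennreal) \<Rightarrow> ennreal) set). \<forall>h\<in>LX. \<forall>r. r < F h \<longrightarrow> (\<exists>s\<in>simple_basis_norm. way_below_on hoare_prev_norm prev_le s F \<and> r < s h)"
        using approx_norm[OF C _ bt] by auto
    qed
    have Cn: "continuous_dcpo_on (hoare_prev_norm :: (('a \<Rightarrow> ennreal) \<Rightarrow> ennreal) set) prev_le"
      unfolding continuous_dcpo_on_def
      using dcpo_closed[OF closed_norm] basis_imp_self[OF po_prev Bn] closed_norm unfolding closedD_def by blast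
    show "continuous_dcpo_on (hoare_prev_norm :: (('a \<Rightarrow> ennreal) \<Rightarrow> ennreal) set) prev_le
          \<and> basis_on (hoare_prev_norm :: (('a \<Rightarrow> ennreal) \<Rightarrow> ennreal) set) prev_le simple_basis_norm
          \<and> (\<lambda>h. if h \<in> LX then h b0 else 0) \<in> (hoare_prev_norm :: (('a \<Rightarrow> ennreal) \<Rightarrow> ennreal) set)
          \<and> (\<forall>F \<in> (hoare_prev_norm :: (('a \<Rightarrow> ennreal) \<Rightarrow> ennreal) set).
                prev_le (\<lambda>h. if h \<in> LX then h b0 else 0) F)"
      using Cn Bn zin zle unfolding zb_eq by blast
  qed
  show ?thesis using Chp Bhp Csub Bsub Norm by blast
qed


end
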